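(* Let $L\ge2$, $\mathcal L=\llbracket1,L\rrbracket$, let $X_1,\dots,X_L$ be independent binary random variables with distributions $q_{X_l}$, let $q_{Z|X_{\mathcal L}}$ be a memoryless channel with finite output alphabet, and let $q_{X_{1:L}^{1:N}Z^{1:N}}=\prod_{i=1}^Nq_{X_{\mathcal L}Z}$. Fix $\xi>0$, $\delta^*_{\mathcal L}(N)=\log(2^L+3)\sqrt{\tfrac2N(L+\log N)}$, $\epsilon_2=2(\delta^*_{\mathcal L}(N)+\xi)$, $r_{X_l}=N(H(X_l|ZX_{1:l-1})-\epsilon_2/2)$. For each $l$, a hash function $G_{X_l}:\{0,1\}^N\to\{0,1\}^{r_{X_l}}$ is chosen uniformly at random (independently over $l$) from a two-universal family, and an encoder $e^{X_l}_N$ maps $N(H(X_l)+\epsilon_2/2)$ bits into $\{0,1\}^N$ such that with uniform input its output distribution is within variational distance $\delta(N)$ of $\prod_{i=1}^Nq_{X_l}$. The scheme runs over $k$ blocks: Block 1: $\widetilde X_{l,1}^{1:N}=e^{X_l}_N(E_{l,1})$ with uniform input $E_{l,1}$; Block $i\in\llbracket2,k\rrbracket$: $\widetilde E_{l,i}=G_{X_l}(\widetilde X_{l,i-1}^{1:N})$ and $\widetilde X_{l,i}^{1:N}=e^{X_l}_N(\widetilde E_{l,i}\|E_{l,i})$ with $E_{l,i}$ a uniform string of $N(I(X_l;ZX_{1:l-1})+\epsilon_2)$ bits and $\|$ concatenation; in each block $\widetilde Z_i^{1:N}$ is the channel output on $(\widetilde X_{l,i}^{1:N})_{l\in\mathcal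 L}$. All fresh randomness, channel noise of distinct blocks and hash choices are mutually independent, and $\widetilde p$ denotes induced distributions (including the random hash choice). Let $\delta^{*(0)}(N)=2/N+2^{L/2}2^{-N\xi/2}$. Then for every block $i\in\llbracket1,k\rrbracket$, $$\mathbb V\big(\widetilde p_{X_{1:L,i}^{1:N}Z_i^{1:N}},\,q_{X_{1:L}^{1:N}Z^{1:N}}\big)\le\delta^*_i(N),\qquad \delta^*_i(N)=L(\delta(N)+\delta^{*(0)}(N))\frac{L^i-1}{L-1}+L^{i+1}\delta(N).$$
   Context: $\mathbb V(p,q)=\sum_x|p(x)-q(x)|$, $\log$ base 2, $X_{1:l-1}=(X_1,\dots,X_{l-1})$; all lengths assumed to be integers. Two-universal hash families are in the sense of Carter–Wegman. *)

theory Defs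
  imports "HOL-Probability.Probability"
begin

definition entropy2 :: "'a pmf \<Rightarrow> real" where
  "entropy2 p = - (\<Sum>x\<in>set_pmf p. pmf p x * log 2 (pmf p x))"

definition cond_entropy2 :: "('a \<times> 'b) pmf \<Rightarrow> real" where
  "cond_entropy2 p = entropy2 p - entropy2 (map_pmf snd p)"

definition mutual_info2 :: "('a \<times> 'b) pmf \<Rightarrow> real" where
  "mutual_info2 p = entropy2 (map_pmf fst p) + entropy2 (map_pmf snd p) - entropy2 p"

text \<open>Variational distance V(p,q) = sum_x |p(x) - q(x)| (no factor 1/2).\<close>
definition var_dist :: "'a pmf \<Rightarrow> 'a pmf \<Rightarrow> real" where
  "var_dist p q = infsum (\<lambda>x. \<bar>pmf p x - pmf q x\<bar>) UNIV"

primrec list_pmf :: "'a pmf list \<Rightarrow> 'a list pmf" where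
  "list_pmf [] = return_pmf []"
| "list_pmf (p # ps) = bind_pmf p (\<lambda>x. map_pmf (Cons x) (list_pmf ps))"

definition unif_bits :: "nat \<Rightarrow> bool list pmf" where
  "unif_bits m = pmf_of_set {xs. length xs = m}"

definition two_universal :: "nat \<Rightarrow> nat \<Rightarrow> (bool list \<Rightarrow> bool list) set \<Rightarrow> bool" where
  "two_universal n r F \<longleftrightarrow> finite F \<and> F \<noteq> {} \<and>
     (\<forall>g\<in>F. \<forall>x. length x = n \<longrightarrow> length (g x) = r) \<and>
     (\<forall>x x'. length x = n \<longrightarrow> length x' = n \<longrightarrow> x \<noteq> x' \<longrightarrow>
        real (card {g\<in>F. g x = g x'}) \<le> real (card F) / 2 ^ r)"

text \<open>A symbol of X_{1:L} is a bool list of length L (entry l-1 is X_l).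
  qX l is the distribution of X_l (l in 1..L); W is the channel q_{Z|X_L}.\<close>
definition q_XL :: "nat \<Rightarrow> (nat \<Rightarrow> bool pmf) \<Rightarrow> bool list pmf" where
  "q_XL L qX = list_pmf (map qX [1..<L+1])"

definition q_joint :: "nat \<Rightarrow> (nat \<Rightarrow> bool pmf) \<Rightarrow> (bool list \<Rightarrow> 'z pmf) \<Rightarrow> (bool list \<times> 'z) pmf" where
  "q_joint L qX W = bind_pmf (q_XL L qX) (\<lambda>x. map_pmf (Pair x) (W x))"

definition q_Xl_ZXprev :: "nat \<Rightarrow> (nat \<Rightarrow> bool pmf) \<Rightarrow> (bool list \<Rightarrow> 'z pmf) \<Rightarrow> nat
     \<Rightarrow> (bool \<times> ('z \<times> bool list)) pmf" where
  "q_Xl_ZXprev L qX W l = map_pmf (\<lambda>(x, z). (x ! (l - 1), (z, take (l - 1) x))) (q_joint L qX W)"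

text \<open>A block: the list of the N symbols (X_{1:L}^j, Z^j), j = 1..N.
  q_{X^{1:N}_{1:L} Z^{1:N}} is the N-fold i.i.d. product.\<close>
definition q_block :: "nat \<Rightarrow> nat \<Rightarrow> (nat \<Rightarrow> bool pmf) \<Rightarrow> (bool list \<Rightarrow> 'z pmf) \<Rightarrow> (bool list \<times> 'z) list pmf" where
  "q_block L N qX W = replicate_pmf N (q_joint L qX W)"

text \<open>Xb is a block of channel inputs: Xb ! (l-1) = X_l^{1:N}. The memoryless channel
  is applied symbol-wise and the block is returned as the list of pairs (X_{1:L}^j, Z^j).\<close>
definition channel_block :: "nat \<Rightarrow> (bool list \<Rightarrow> 'z pmf) \<Rightarrow> bool list list \<Rightarrow> (bool list \<times> 'z) list pmf" where
  "channel_block N W Xb =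
     (let cols = map (\<lambda>j. map (\<lambda>xs. xs ! j) Xb) [0..<N]
      in map_pmf (zip cols) (list_pmf (map W cols)))"

definition first_block :: "nat \<Rightarrow> (nat \<Rightarrow> bool list \<Rightarrow> bool list) \<Rightarrow> (nat \<Rightarrow> nat) \<Rightarrow> bool list list pmf" where
  "first_block L enc m = list_pmf (map (\<lambda>l. map_pmf (enc l) (unif_bits (m l))) [1..<L+1])"

text \<open>Block i \<ge> 2: X_{l,i} = e_l(G_l(X_{l,i-1}) || E_{l,i}), E_{l,i} uniform of s l bits.
  Gs ! (l-1) is the hash G_{X_l}; prev ! (l-1) is X_{l,i-1}.\<close>
definition next_block :: "nat \<Rightarrow> (nat \<Rightarrow> bool list \<Rightarrow> bool list) \<Rightarrow> (nat \<Rightarrow> nat)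
     \<Rightarrow> (bool list \<Rightarrow> bool list) list \<Rightarrow> bool list list \<Rightarrow> bool list list pmf" where
  "next_block L enc s Gs prev =
     list_pmf (map (\<lambda>l. map_pmf (\<lambda>E. enc l ((Gs ! (l - 1)) (prev ! (l - 1)) @ E)) (unif_bits (s l))) [1..<L+1])"

primrec inputs_run :: "nat \<Rightarrow> (nat \<Rightarrow> bool list \<Rightarrow> bool list) \<Rightarrow> (nat \<Rightarrow> nat) \<Rightarrow> (nat \<Rightarrow> nat)
     \<Rightarrow> (bool list \<Rightarrow> bool list) list \<Rightarrow> nat \<Rightarrow> bool list list list pmf" where
  "inputs_run L enc m s Gs 0 = return_pmf []"
| "inputs_run L enc m s Gs (Suc n) =
     bind_pmf (inputs_run L enc m s Gs n) (\<lambda>Xs.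
       map_pmf (\<lambda>X. Xs @ [X]) (if Xs = [] then first_block L enc m else next_block L enc s Gs (last Xs)))"

definition scheme :: "nat \<Rightarrow> nat \<Rightarrow> (bool list \<Rightarrow> 'z pmf) \<Rightarrow> (nat \<Rightarrow> (bool list \<Rightarrow> bool list) set)
     \<Rightarrow> (nat \<Rightarrow> bool list \<Rightarrow> bool list) \<Rightarrow> (nat \<Rightarrow> nat) \<Rightarrow> (nat \<Rightarrow> nat) \<Rightarrow> nat
     \<Rightarrow> (bool list \<times> 'z) list list pmf" where
  "scheme L N W F enc m s k =
     bind_pmf (list_pmf (map (\<lambda>l. pmf_of_set (F l)) [1..<L+1])) (\<lambda>Gs.
     bind_pmf (inputs_run L enc m s Gs k) (\<lambda>Xss.
     list_pmf (map (channel_block N W) Xss)))"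

definition scheme_block :: "nat \<Rightarrow> nat \<Rightarrow> (bool list \<Rightarrow> 'z pmf) \<Rightarrow> (nat \<Rightarrow> (bool list \<Rightarrow> bool list) set)
     \<Rightarrow> (nat \<Rightarrow> bool list \<Rightarrow> bool list) \<Rightarrow> (nat \<Rightarrow> nat) \<Rightarrow> (nat \<Rightarrow> nat) \<Rightarrow> nat \<Rightarrow> nat
     \<Rightarrow> (bool list \<times> 'z) list pmf" where
  "scheme_block L N W F enc m s k i = map_pmf (\<lambda>bs. bs ! (i - 1)) (scheme L N W F enc m s k)"

end

theory Submission
  imports Defs
begin

definition finpmf :: "'a pmf \<Rightarrow> bool" where "finpmf p \<longleftrightarrow> finite (set_pmf p)"

lemma var_dist_fin:
  assumes "finite A" "set_pmf p \<subseteq> A" "set_pmf q \<subseteq> A"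
  shows "var_dist p q = (\<Sum>x\<in>A. \<bar>pmf p x - pmf q x\<bar>)"
proof -
  have "infsum (\<lambda>x. \<bar>pmf p x - pmf q x\<bar>) UNIV = infsum (\<lambda>x. \<bar>pmf p x - pmf q x\<bar>) A"
  proof (rule infsum_cong_neutral)
    fix x assume "x \<in> UNIV - A"
    then have "pmf p x = 0" "pmf q x = 0" using assms by (auto simp: set_pmf_iff)
    then show "\<bar>pmf p x - pmf q x\<bar> = 0" by simp
  qed auto
  also have "\<dots> = (\<Sum>x\<in>A. \<bar>pmf p x - pmf q x\<bar>)" using assms(1) by simp
  finally show ?thesis unfolding var_dist_def .
qed

lemma var_dist_fin':
  assumes "finpmf p" "finpmf q"
  shows "var_dist p q = (\<Sum>x\<in>set_pmf p \<union> set_pmf q. \<bar>pmf p x - pmf q x\<bar>)"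
  using assms by (intro var_dist_fin) (auto simp: finpmf_def)

lemma var_dist_nonneg: "finpmf p \<Longrightarrow> finpmf q \<Longrightarrow> var_dist p q \<ge> 0"
  by (simp add: var_dist_fin' sum_nonneg)

lemma var_dist_sym: "var_dist p q = var_dist q p"
  unfolding var_dist_def by (simp add: abs_minus_commute)

lemma var_dist_triangle:
  assumes "finpmf p" "finpmf q" "finpmf r"
  shows "var_dist p r \<le> var_dist p q + var_dist q r"
proof -
  let ?A = "set_pmf p \<union> set_pmf q \<union> set_pmf r"
  have fA: "finite ?A" using assms by (auto simp: finpmf_def)
  have "var_dist p r = (\<Sum>x\<in>?A. \<bar>pmf p x - pmf r x\<bar>)" by (rule var_dist_fin[OF fA]) auto
  also have "\<dots> \<le> (\<Sum>x\<in>?A. \<bar>pmf p x - pmf q x\<bar> + \<bar>pmf q x - pmf r x\<bar>)"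
    by (intro sum_mono) linarith
  also have "\<dots> = var_dist p q + var_dist q r"
  proof -
    have "var_dist p q = (\<Sum>x\<in>?A. \<bar>pmf p x - pmf q x\<bar>)" by (rule var_dist_fin[OF fA]) auto
    moreover have "var_dist q r = (\<Sum>x\<in>?A. \<bar>pmf q x - pmf r x\<bar>)" by (rule var_dist_fin[OF fA]) auto
    ultimately show ?thesis by (simp add: sum.distrib)
  qed
  finally show ?thesis .
qed

lemma finpmf_bind: "finpmf p \<Longrightarrow> (\<And>x. x \<in> set_pmf p \<Longrightarrow> finpmf (K x)) \<Longrightarrow> finpmf (bind_pmf p K)"
  by (auto simp: finpmf_def set_bind_pmf)

lemma finpmf_map: "finpmf p \<Longrightarrow> finpmf (map_pmf f p)"
  by (auto simp: finpmf_def)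

lemma finpmf_return: "finpmf (return_pmf x)"
  by (auto simp: finpmf_def)

lemma finpmf_of_set: "finite A \<Longrightarrow> A \<noteq> {} \<Longrightarrow> finpmf (pmf_of_set A)"
  by (auto simp: finpmf_def)

lemma finpmf_finite_type: "finpmf (p :: 'a :: finite pmf)"
  by (auto simp: finpmf_def)

lemma pmf_bind_fin:
  assumes "finite A" "set_pmf p \<subseteq> A"
  shows "pmf (bind_pmf p K) y = (\<Sum>x\<in>A. pmf p x * pmf (K x) y)"
  unfolding pmf_bind using assms by (subst integral_measure_pmf[of A]) (auto simp: set_pmf_eq)

lemma var_dist_bind_le:
  assumes fp: "finpmf p" and fq: "finpmf q"
    and fK: "\<And>x. x \<in> set_pmf p \<union> set_pmf q \<Longrightarrow> finpmf (K x)"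
  shows "var_dist (bind_pmf p K) (bind_pmf q K) \<le> var_dist p q"
proof -
  let ?S = "set_pmf p \<union> set_pmf q"
  let ?Y = "\<Union>x\<in>?S. set_pmf (K x)"
  have fS: "finite ?S" using fp fq by (auto simp: finpmf_def)
  have fY: "finite ?Y" using fS fK by (auto simp: finpmf_def)
  have "var_dist (bind_pmf p K) (bind_pmf q K) = (\<Sum>y\<in>?Y. \<bar>pmf (bind_pmf p K) y - pmf (bind_pmf q K) y\<bar>)"
    by (rule var_dist_fin[OF fY]) (auto simp: set_bind_pmf)
  also have "\<dots> = (\<Sum>y\<in>?Y. \<bar>\<Sum>x\<in>?S. (pmf p x - pmf q x) * pmf (K x) y\<bar>)"
    by (simp add: pmf_bind_fin[OF fS] sum_subtractf left_diff_distrib)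
  also have "\<dots> \<le> (\<Sum>y\<in>?Y. \<Sum>x\<in>?S. \<bar>pmf p x - pmf q x\<bar> * pmf (K x) y)"
    by (intro sum_mono order.trans[OF sum_abs]) (simp add: abs_mult)
  also have "\<dots> = (\<Sum>x\<in>?S. \<bar>pmf p x - pmf q x\<bar> * (\<Sum>y\<in>?Y. pmf (K x) y))"
    by (subst sum.swap) (simp add: sum_distrib_left)
  also have "\<dots> = (\<Sum>x\<in>?S. \<bar>pmf p x - pmf q x\<bar>)"
    by (intro sum.cong refl) (subst sum_pmf_eq_1[OF fY], auto)
  also have "\<dots> = var_dist p q" by (rule var_dist_fin[symmetric, OF fS]) auto
  finally show ?thesis .
qed

lemma var_dist_map_le:
  assumes "finpmf p" "finpmf q"
  shows "var_dist (map_pmf f p) (map_pmf f q) \<le> var_dist p q"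
  using var_dist_bind_le[OF assms, of "\<lambda>x. return_pmf (f x)"] by (simp add: map_pmf_def finpmf_return)

lemma var_dist_bind_same:
  assumes fq: "finpmf q"
    and fK: "\<And>x. x \<in> set_pmf q \<Longrightarrow> finpmf (K1 x)" "\<And>x. x \<in> set_pmf q \<Longrightarrow> finpmf (K2 x)"
    and le: "\<And>x. x \<in> set_pmf q \<Longrightarrow> var_dist (K1 x) (K2 x) \<le> c"
  shows "var_dist (bind_pmf q K1) (bind_pmf q K2) \<le> c"
proof -
  let ?S = "set_pmf q"
  let ?Y = "\<Union>x\<in>?S. set_pmf (K1 x) \<union> set_pmf (K2 x)"
  have fS: "finite ?S" using fq by (auto simp: finpmf_def)
  have fY: "finite ?Y" using fS fK by (auto simp: finpmf_def)
  have "var_dist (bind_pmf q K1) (bind_pmf q K2) = (\<Sum>y\<in>?Y. \<bar>pmf (bind_pmf q K1) y - pmf (bind_pmf q K2) y\<bar>)"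
    by (rule var_dist_fin[OF fY]) (auto simp: set_bind_pmf)
  also have "\<dots> = (\<Sum>y\<in>?Y. \<bar>\<Sum>x\<in>?S. pmf q x * (pmf (K1 x) y - pmf (K2 x) y)\<bar>)"
    by (simp add: pmf_bind_fin[OF fS] sum_subtractf right_diff_distrib)
  also have "\<dots> \<le> (\<Sum>y\<in>?Y. \<Sum>x\<in>?S. pmf q x * \<bar>pmf (K1 x) y - pmf (K2 x) y\<bar>)"
    by (intro sum_mono order.trans[OF sum_abs]) (simp add: abs_mult)
  also have "\<dots> = (\<Sum>x\<in>?S. pmf q x * (\<Sum>y\<in>?Y. \<bar>pmf (K1 x) y - pmf (K2 x) y\<bar>))"
    by (subst sum.swap) (simp add: sum_distrib_left)
  also have "\<dots> = (\<Sum>x\<in>?S. pmf q x * var_dist (K1 x) (K2 x))"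
    by (intro sum.cong refl arg_cong2[where f="(*)"] var_dist_fin[symmetric, OF fY]) auto
  also have "\<dots> \<le> (\<Sum>x\<in>?S. pmf q x * c)"
    by (intro sum_mono mult_left_mono le) auto
  also have "\<dots> = c" using sum_pmf_eq_1[OF fS, of q] by (simp add: sum_distrib_right[symmetric])
  finally show ?thesis .
qed


lemma set_list_pmf_length: "xs \<in> set_pmf (list_pmf ps) \<Longrightarrow> length xs = length ps"
  by (induction ps arbitrary: xs) (auto simp: set_bind_pmf)

lemma set_list_pmf_nth: "xs \<in> set_pmf (list_pmf ps) \<Longrightarrow> j < length ps \<Longrightarrow> xs ! j \<in> set_pmf (ps ! j)"
  by (induction ps arbitrary: xs j) (auto simp: set_bind_pmf nth_Cons split: nat.splits)

lemma finpmf_list_pmf: "(\<And>p. p \<in> set ps \<Longrightarrow> finpmf p) \<Longrightarrow> finpmf (list_pmf ps)"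
  by (induction ps) (auto intro!: finpmf_bind finpmf_map finpmf_return)

lemma list_pmf_nth: "j < length ps \<Longrightarrow> map_pmf (\<lambda>xs. xs ! j) (list_pmf ps) = ps ! j"
proof (induction ps arbitrary: j)
  case Nil then show ?case by simp
next
  case (Cons p ps)
  show ?case
  proof (cases j)
    case 0 then show ?thesis
      by (simp add: map_bind_pmf map_pmf_comp bind_pmf_const flip: map_pmf_def)
  next
    case (Suc j')
    then have "map_pmf (\<lambda>xs. xs ! j) (list_pmf (p # ps)) = bind_pmf p (\<lambda>x. map_pmf (\<lambda>xs. xs ! j') (list_pmf ps))"
      by (simp add: map_bind_pmf map_pmf_comp)
    also have "\<dots> = ps ! j'" using Cons Suc by (simp add: bind_pmf_const)
    finally show ?thesis using Suc by simp
  qed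
qed

lemma list_pmf_bind_prod:
  "bind_pmf (list_pmf ps) (\<lambda>xs. list_pmf (map (\<lambda>j. K j (xs ! j)) [0..<length ps]))
   = list_pmf (map (\<lambda>j. bind_pmf (ps ! j) (K j)) [0..<length ps])"
proof (induction ps arbitrary: K)
  case Nil then show ?case by simp
next
  case (Cons p ps)
  let ?K' = "\<lambda>j. K (Suc j)"
  have "bind_pmf (list_pmf (p # ps)) (\<lambda>xs. list_pmf (map (\<lambda>j. K j (xs ! j)) [0..<length (p # ps)]))
     = bind_pmf p (\<lambda>x. bind_pmf (list_pmf ps) (\<lambda>ys. bind_pmf (K 0 x) (\<lambda>y.
          map_pmf (Cons y) (list_pmf (map (\<lambda>j. ?K' j (ys ! j)) [0..<length ps])))))"
    by (simp add: map_upt_Suc bind_map_pmf bind_assoc_pmf del: upt_Suc)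
  also have "\<dots> = bind_pmf p (\<lambda>x. bind_pmf (K 0 x) (\<lambda>y. map_pmf (Cons y)
          (bind_pmf (list_pmf ps) (\<lambda>ys. list_pmf (map (\<lambda>j. ?K' j (ys ! j)) [0..<length ps])))))"
    by (subst bind_commute_pmf) (simp add: map_bind_pmf)
  also have "\<dots> = bind_pmf p (\<lambda>x. bind_pmf (K 0 x) (\<lambda>y. map_pmf (Cons y)
          (list_pmf (map (\<lambda>j. bind_pmf (ps ! j) (?K' j)) [0..<length ps]))))"
    using Cons.IH[of "\<lambda>j. K (Suc j)"] by simp
  also have "\<dots> = list_pmf (map (\<lambda>j. bind_pmf ((p # ps) ! j) (K j)) [0..<length (p # ps)])"
    by (simp add: map_upt_Suc bind_assoc_pmf del: upt_Suc)
  finally show ?case .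
qed

lemma list_pmf_bind_prod':
  "bind_pmf (list_pmf (map P [0..<n])) (\<lambda>xs. list_pmf (map (\<lambda>j. K j (xs ! j)) [0..<n]))
   = list_pmf (map (\<lambda>j. bind_pmf (P j) (K j)) [0..<n])"
proof -
  have eq: "map (\<lambda>j. bind_pmf (map P [0..<n] ! j) (K j)) [0..<n] = map (\<lambda>j. bind_pmf (P j) (K j)) [0..<n]"
    by (rule map_cong) auto
  show ?thesis using list_pmf_bind_prod[of "map P [0..<n]" K] by (simp only: length_map length_upt diff_zero eq)
qed

lemma replicate_pmf_return: "replicate_pmf n (return_pmf x) = return_pmf (replicate n x)"
  by (induction n) (auto simp: bind_return_pmf)

lemma replicate_pmf_dep:
  "replicate_pmf n (bind_pmf A (\<lambda>x. map_pmf (Pair x) (W x)))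
   = bind_pmf (replicate_pmf n A) (\<lambda>xs. map_pmf (zip xs) (list_pmf (map W xs)))"
proof (induction n)
  case 0 then show ?case by (simp add: bind_return_pmf bind_pmf_const)
next
  case (Suc n)
  let ?P = "bind_pmf A (\<lambda>x. map_pmf (Pair x) (W x))"
  have "replicate_pmf (Suc n) ?P = bind_pmf A (\<lambda>x. bind_pmf (W x) (\<lambda>z. map_pmf (Cons (x, z)) (replicate_pmf n ?P)))"
    by (simp only: replicate_pmf.simps) (simp add: bind_assoc_pmf map_pmf_def bind_return_pmf)
  also have "\<dots> = bind_pmf A (\<lambda>x. bind_pmf (W x) (\<lambda>z. bind_pmf (replicate_pmf n A)
        (\<lambda>xs. map_pmf (\<lambda>zs. (x, z) # zip xs zs) (list_pmf (map W xs)))))"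
    by (simp only: Suc.IH) (simp add: map_bind_pmf map_pmf_comp)
  also have "\<dots> = bind_pmf A (\<lambda>x. bind_pmf (replicate_pmf n A) (\<lambda>xs. bind_pmf (W x)
        (\<lambda>z. map_pmf (\<lambda>zs. (x, z) # zip xs zs) (list_pmf (map W xs)))))"
    by (rule bind_pmf_cong[OF refl], rule bind_commute_pmf)
  also have "\<dots> = bind_pmf (replicate_pmf (Suc n) A) (\<lambda>xs. map_pmf (zip xs) (list_pmf (map W xs)))"
    by (simp add: bind_assoc_pmf map_bind_pmf bind_map_pmf map_pmf_comp bind_return_pmf)
  finally show ?case .
qed

lemma replicate_pmf_indep:
  "replicate_pmf n (bind_pmf A (\<lambda>a. map_pmf (f a) B))
   = bind_pmf (replicate_pmf n A) (\<lambda>as. map_pmf (\<lambda>bs. map2 f as bs) (replicate_pmf n B))"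
proof (induction n)
  case 0 then show ?case by (simp add: bind_return_pmf bind_pmf_const)
next
  case (Suc n)
  let ?P = "bind_pmf A (\<lambda>a. map_pmf (f a) B)"
  have "replicate_pmf (Suc n) ?P = bind_pmf A (\<lambda>x. bind_pmf B (\<lambda>z. map_pmf (Cons (f x z)) (replicate_pmf n ?P)))"
    by (simp only: replicate_pmf.simps) (simp add: bind_assoc_pmf map_pmf_def bind_return_pmf)
  also have "\<dots> = bind_pmf A (\<lambda>x. bind_pmf B (\<lambda>z. bind_pmf (replicate_pmf n A)
        (\<lambda>xs. map_pmf (\<lambda>zs. f x z # map2 f xs zs) (replicate_pmf n B))))"
    by (simp only: Suc.IH) (simp add: map_bind_pmf map_pmf_comp)
  also have "\<dots> = bind_pmf A (\<lambda>x. bind_pmf (replicate_pmf n A) (\<lambda>xs. bind_pmf B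
        (\<lambda>z. map_pmf (\<lambda>zs. f x z # map2 f xs zs) (replicate_pmf n B))))"
    by (rule bind_pmf_cong[OF refl], rule bind_commute_pmf)
  also have "\<dots> = bind_pmf (replicate_pmf (Suc n) A) (\<lambda>as. map_pmf (\<lambda>bs. map2 f as bs) (replicate_pmf (Suc n) B))"
    by (simp add: bind_assoc_pmf map_bind_pmf bind_map_pmf map_pmf_comp bind_return_pmf map_pmf_def)
  finally show ?case .
qed

definition cols :: "nat \<Rightarrow> 'a list list \<Rightarrow> 'a list list" where
  "cols N Xb = map (\<lambda>j. map (\<lambda>xs. xs ! j) Xb) [0..<N]"

lemma cols_Cons: "length as = N \<Longrightarrow> cols N (as # Xb) = map2 Cons as (cols N Xb)"
  unfolding cols_def by (rule nth_equalityI) auto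

lemma replicate_list_pmf:
  "replicate_pmf N (list_pmf ps) = map_pmf (cols N) (list_pmf (map (replicate_pmf N) ps))"
proof (induction ps)
  case Nil then show ?case by (simp add: replicate_pmf_return cols_def map_replicate_const)
next
  case (Cons p ps)
  have "replicate_pmf N (list_pmf (p # ps))
     = bind_pmf (replicate_pmf N p) (\<lambda>as. map_pmf (\<lambda>bs. map2 Cons as bs) (replicate_pmf N (list_pmf ps)))"
    by (simp add: replicate_pmf_indep)
  also have "\<dots> = bind_pmf (replicate_pmf N p) (\<lambda>as. map_pmf (\<lambda>Xb. cols N (as # Xb)) (list_pmf (map (replicate_pmf N) ps)))"
    by (rule bind_pmf_cong[OF refl]) (simp add: Cons.IH map_pmf_comp cols_Cons set_replicate_pmf)
  also have "\<dots> = map_pmf (cols N) (list_pmf (map (replicate_pmf N) (p # ps)))"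
    by (simp add: map_bind_pmf map_pmf_comp)
  finally show ?case .
qed

declare upt_Suc[simp del]

primrec chain :: "(nat \<Rightarrow> bool list \<Rightarrow> bool list) \<Rightarrow> (nat \<Rightarrow> nat) \<Rightarrow> (nat \<Rightarrow> nat) \<Rightarrow> nat
    \<Rightarrow> (bool list \<Rightarrow> bool list) \<Rightarrow> nat \<Rightarrow> bool list pmf" where
  "chain enc m s l G 0 = map_pmf (enc l) (unif_bits (m l))"
| "chain enc m s l G (Suc n) = bind_pmf (chain enc m s l G n) (\<lambda>x. map_pmf (\<lambda>E. enc l (G x @ E)) (unif_bits (s l)))"

lemma inputs_run_length: "Xs \<in> set_pmf (inputs_run L enc m s Gs n) \<Longrightarrow> length Xs = n"
  by (induction n arbitrary: Xs) (auto simp: set_bind_pmf)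

lemma map_upt_1: "map f [1..<L+1] = map (\<lambda>j. f (Suc j)) [0..<L]"
proof -
  have "[1..<L+1] = map Suc [0..<L]" by (simp add: map_Suc_upt)
  then show ?thesis by simp
qed

lemma map_upt_1': "map f [Suc 0..<Suc L] = map (\<lambda>j. f (Suc j)) [0..<L]"
  using map_upt_1[of f L] by simp

lemma inputs_run_last:
  assumes "length Gs = L" shows "map_pmf last (inputs_run L enc m s Gs (Suc n))
     = list_pmf (map (\<lambda>l. chain enc m s l (Gs ! (l - 1)) n) [1..<L+1])"
proof (induction n)
  case 0
  then show ?case by (simp add: map_pmf_comp first_block_def bind_return_pmf del: upt_Suc)
next
  case (Suc n)
  have "map_pmf last (inputs_run L enc m s Gs (Suc (Suc n)))
      = bind_pmf (inputs_run L enc m s Gs (Suc n)) (\<lambda>Xs. next_block L enc s Gs (last Xs))"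
    apply (simp only: inputs_run.simps(2)[of _ _ _ _ _ "Suc n"] map_bind_pmf)
    apply (rule bind_pmf_cong[OF refl])
    apply (drule inputs_run_length)
    apply (auto simp: map_pmf_comp)
    done
  also have "\<dots> = bind_pmf (map_pmf last (inputs_run L enc m s Gs (Suc n))) (next_block L enc s Gs)"
    by (simp add: bind_map_pmf)
  also have "\<dots> = bind_pmf (list_pmf (map (\<lambda>j. chain enc m s (Suc j) (Gs ! j) n) [0..<L]))
      (\<lambda>xs. list_pmf (map (\<lambda>j. map_pmf (\<lambda>E. enc (Suc j) ((Gs ! j) (xs ! j) @ E)) (unif_bits (s (Suc j)))) [0..<L]))"
    by (simp only: Suc.IH) (simp add: map_upt_1 map_upt_1' next_block_def[abs_def])
  also have "\<dots> = list_pmf (map (\<lambda>j. chain enc m s (Suc j) (Gs ! j) (Suc n)) [0..<L])"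
    using list_pmf_bind_prod'[of "\<lambda>j. chain enc m s (Suc j) (Gs ! j) n" L
        "\<lambda>j x. map_pmf (\<lambda>E. enc (Suc j) ((Gs ! j) x @ E)) (unif_bits (s (Suc j)))"]
    by simp
  finally show ?case by (simp only: map_upt_1 diff_Suc_1)
qed

lemma inputs_run_prefix:
  assumes "1 \<le> i" "i \<le> k"
  shows "map_pmf (\<lambda>Xss. Xss ! (i - 1)) (inputs_run L enc m s Gs k) = map_pmf last (inputs_run L enc m s Gs i)"
  using assms(2)
proof (induction k)
  case 0 then show ?case using assms by simp
next
  case (Suc k)
  show ?case
  proof (cases "i = Suc k")
    case True
    show ?thesis unfolding True
      by (rule map_pmf_cong[OF refl]) (auto dest!: inputs_run_length simp: last_conv_nth)
  next
    case False
    then have ik: "i \<le> k" using Suc by simp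
    have "map_pmf (\<lambda>Xss. Xss ! (i - 1)) (inputs_run L enc m s Gs (Suc k))
        = map_pmf (\<lambda>Xss. Xss ! (i - 1)) (inputs_run L enc m s Gs k)"
      apply (simp only: inputs_run.simps(2) map_bind_pmf map_pmf_comp map_pmf_def[of "\<lambda>Xss. Xss ! (i - 1)" "inputs_run L enc m s Gs k"])
      apply (rule bind_pmf_cong[OF refl])
      subgoal for x
        using ik assms(1) inputs_run_length[of x L enc m s Gs k]
        by (subgoal_tac "i - 1 < length x") (auto simp: nth_append map_pmf_const)
      done
    then show ?thesis using Suc.IH[OF ik] by simp
  qed
qed

lemma scheme_block_eq:
  assumes "1 \<le> i" "i \<le> k"
  shows "scheme_block L N W F enc m s k i
    = bind_pmf (list_pmf (map (\<lambda>l. bind_pmf (pmf_of_set (F l)) (\<lambda>G. chain enc m s l G (i - 1))) [1..<L+1]))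
        (channel_block N W)"
proof -
  have "scheme_block L N W F enc m s k i
     = bind_pmf (list_pmf (map (\<lambda>l. pmf_of_set (F l)) [1..<L+1])) (\<lambda>Gs.
         bind_pmf (inputs_run L enc m s Gs k) (\<lambda>Xss. channel_block N W (Xss ! (i - 1))))"
    unfolding scheme_block_def scheme_def map_bind_pmf
    apply (rule bind_pmf_cong[OF refl])+
    apply (drule inputs_run_length)
    apply (subst list_pmf_nth) using assms apply auto
    done
  also have "\<dots> = bind_pmf (list_pmf (map (\<lambda>l. pmf_of_set (F l)) [1..<L+1])) (\<lambda>Gs.
         bind_pmf (map_pmf last (inputs_run L enc m s Gs i)) (channel_block N W))"
    by (rule bind_pmf_cong[OF refl]) (simp add: inputs_run_prefix[OF assms, symmetric] bind_map_pmf)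
  also have "\<dots> = bind_pmf (list_pmf (map (\<lambda>l. pmf_of_set (F l)) [1..<L+1])) (\<lambda>Gs.
         bind_pmf (list_pmf (map (\<lambda>l. chain enc m s l (Gs ! (l - 1)) (i - 1)) [1..<L+1])) (channel_block N W))"
    apply (rule bind_pmf_cong[OF refl])
    apply (drule set_list_pmf_length)
    using assms inputs_run_last[of _ L enc m s "i - 1"] by (simp add: Suc_le_eq)
  also have "\<dots> = bind_pmf (bind_pmf (list_pmf (map (\<lambda>j. pmf_of_set (F (Suc j))) [0..<L])) (\<lambda>Gs.
         list_pmf (map (\<lambda>j. chain enc m s (Suc j) (Gs ! j) (i - 1)) [0..<L]))) (channel_block N W)"
    by (simp add: map_upt_1 map_upt_1' bind_assoc_pmf)
  also have "\<dots> = bind_pmf (list_pmf (map (\<lambda>l. bind_pmf (pmf_of_set (F l)) (\<lambda>G. chain enc m s l G (i - 1))) [1..<L+1]))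
        (channel_block N W)"
    using list_pmf_bind_prod'[of "\<lambda>j. pmf_of_set (F (Suc j))" L "\<lambda>j G. chain enc m s (Suc j) G (i - 1)"]
    by (simp add: map_upt_1 map_upt_1')
  finally show ?thesis .
qed

lemma q_block_eq:
  "q_block L N qX W = bind_pmf (list_pmf (map (\<lambda>l. replicate_pmf N (qX l)) [1..<L+1])) (channel_block N W)"
  unfolding q_block_def q_joint_def q_XL_def replicate_pmf_dep replicate_list_pmf
  by (simp add: bind_map_pmf channel_block_def cols_def map_map o_def Let_def channel_block_def[abs_def])

declare upt_Suc[simp]

lemma var_dist_bind2:
  assumes fp: "finpmf p" and fq: "finpmf q"
    and fK1: "\<And>x. x \<in> set_pmf p \<union> set_pmf q \<Longrightarrow> finpmf (K1 x)"
    and fK2: "\<And>x. x \<in> set_pmf q \<Longrightarrow> finpmf (K2 x)"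
    and le: "\<And>x. x \<in> set_pmf q \<Longrightarrow> var_dist (K1 x) (K2 x) \<le> c"
  shows "var_dist (bind_pmf p K1) (bind_pmf q K2) \<le> var_dist p q + c"
proof -
  have "var_dist (bind_pmf p K1) (bind_pmf q K2) \<le> var_dist (bind_pmf p K1) (bind_pmf q K1) + var_dist (bind_pmf q K1) (bind_pmf q K2)"
    by (rule var_dist_triangle) (use fp fq fK1 fK2 in \<open>auto intro!: finpmf_bind\<close>)
  also have "\<dots> \<le> var_dist p q + c"
    by (intro add_mono var_dist_bind_le var_dist_bind_same fp fq fK1 fK2 le) auto
  finally show ?thesis .
qed

lemma finpmf_list_pmf_set: "finpmf (list_pmf ps) \<Longrightarrow> True" by simp

lemma var_dist_list_pmf:
  assumes "length ps = length qs"
    and "\<And>p. p \<in> set ps \<Longrightarrow> finpmf p" "\<And>q. q \<in> set qs \<Longrightarrow> finpmf q"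
  shows "var_dist (list_pmf ps) (list_pmf qs) \<le> (\<Sum>j<length ps. var_dist (ps ! j) (qs ! j))"
  using assms
proof (induction ps arbitrary: qs)
  case Nil then show ?case by (simp add: var_dist_def)
next
  case (Cons p ps)
  then obtain q qs' where qs: "qs = q # qs'" by (cases qs) auto
  have fl1: "finpmf (list_pmf ps)" using Cons by (intro finpmf_list_pmf) auto
  have fl2: "finpmf (list_pmf qs')" using Cons qs by (intro finpmf_list_pmf) auto
  have "var_dist (list_pmf (p # ps)) (list_pmf qs)
      = var_dist (bind_pmf p (\<lambda>x. map_pmf (Cons x) (list_pmf ps))) (bind_pmf q (\<lambda>x. map_pmf (Cons x) (list_pmf qs')))"
    by (simp add: qs)
  also have "\<dots> \<le> var_dist p q + var_dist (list_pmf ps) (list_pmf qs')"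
    by (rule var_dist_bind2) (use Cons qs fl1 fl2 in \<open>auto intro!: finpmf_map var_dist_map_le\<close>)
  also have "\<dots> \<le> var_dist p q + (\<Sum>j<length ps. var_dist (ps ! j) (qs' ! j))"
    using Cons qs by (intro add_mono Cons.IH) auto
  also have "\<dots> = (\<Sum>j<length (p # ps). var_dist ((p # ps) ! j) (qs ! j))"
    by (simp only: qs length_Cons sum.lessThan_Suc_shift nth_Cons_0 nth_Cons_Suc)
  finally show ?case .
qed

lemma finite_bits: "finite {xs :: bool list. length xs = n}"
  by (rule finite_list_length)

lemma bits_nonempty: "{xs :: bool list. length xs = n} \<noteq> {}"
  by (auto intro!: exI[of _ "replicate n False"])

lemma finpmf_unif: "finpmf (unif_bits n)"
  unfolding unif_bits_def by (intro finpmf_of_set finite_bits bits_nonempty)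

lemma set_unif: "set_pmf (unif_bits n) = {xs. length xs = n}"
  unfolding unif_bits_def by (intro set_pmf_of_set finite_bits bits_nonempty)

lemma pair_pmf_of_set:
  assumes "finite A" "A \<noteq> {}" "finite B" "B \<noteq> {}"
  shows "pair_pmf (pmf_of_set A) (pmf_of_set B) = pmf_of_set (A \<times> B)"
proof (rule pmf_eqI)
  fix z :: "'a \<times> 'b"
  obtain a b where z: "z = (a, b)" by fastforce
  show "pmf (pair_pmf (pmf_of_set A) (pmf_of_set B)) z = pmf (pmf_of_set (A \<times> B)) z"
    using assms by (simp add: z pmf_pair indicator_def card_cartesian_product)
qed

lemma unif_append:
  "bind_pmf (unif_bits r) (\<lambda>y. map_pmf (\<lambda>E. y @ E) (unif_bits s)) = unif_bits (r + s)"
proof -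
  let ?A = "{xs :: bool list. length xs = r}" and ?B = "{xs :: bool list. length xs = s}"
  have "bind_pmf (unif_bits r) (\<lambda>y. map_pmf (\<lambda>E. y @ E) (unif_bits s)) = map_pmf (\<lambda>(y, E). y @ E) (pair_pmf (unif_bits r) (unif_bits s))"
    by (simp add: pair_pmf_def map_bind_pmf map_pmf_def bind_assoc_pmf bind_return_pmf)
  also have "\<dots> = map_pmf (\<lambda>(y, E). y @ E) (pmf_of_set (?A \<times> ?B))"
    unfolding unif_bits_def using bits_nonempty[of r] bits_nonempty[of s] by (subst pair_pmf_of_set) (auto intro: finite_bits)
  also have "\<dots> = pmf_of_set ((\<lambda>(y, E). y @ E) ` (?A \<times> ?B))"
    using bits_nonempty[of r] bits_nonempty[of s] by (intro map_pmf_of_set_inj) (auto simp: inj_on_def finite_bits)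
  also have "(\<lambda>(y, E). y @ E) ` (?A \<times> ?B) = {xs. length xs = r + s}"
  proof (rule set_eqI, rule iffI)
    fix z :: "bool list" assume "z \<in> {xs. length xs = r + s}"
    then have "z = (\<lambda>(y, E). y @ E) (take r z, drop r z)" "(take r z, drop r z) \<in> ?A \<times> ?B" by auto
    then show "z \<in> (\<lambda>(y, E). y @ E) ` (?A \<times> ?B)" by blast
  qed auto
  finally show ?thesis by (simp add: unif_bits_def)
qed

lemma var_dist_pair_same:
  assumes "finpmf D" "finpmf A" "finpmf B"
  shows "var_dist (bind_pmf D (\<lambda>G. map_pmf (Pair G) A)) (bind_pmf D (\<lambda>G. map_pmf (Pair G) B)) \<le> var_dist A B"
  by (rule var_dist_bind_same) (use assms in \<open>auto intro!: finpmf_map var_dist_map_le\<close>)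

lemma chain_bound:
  fixes D :: "(bool list \<Rightarrow> bool list) pmf" and Q :: "bool list pmf"
  assumes fD: "finpmf D" and fQ: "finpmf Q"
    and rs: "r + s l = m l"
    and hlen: "\<And>G x. G \<in> set_pmf D \<Longrightarrow> length x = N \<Longrightarrow> length (G x) = r"
    and elen: "\<And>E. length E = m l \<Longrightarrow> length (enc l E) = N"
    and encd: "var_dist (map_pmf (enc l) (unif_bits (m l))) Q \<le> \<delta>"
    and lhl: "var_dist (bind_pmf D (\<lambda>G. map_pmf (\<lambda>x. (G, G x)) Q)) (bind_pmf D (\<lambda>G. map_pmf (Pair G) (unif_bits r))) \<le> \<eta>"
  shows "var_dist (bind_pmf D (\<lambda>G. map_pmf (Pair G) (chain enc m s l G n))) (bind_pmf D (\<lambda>G. map_pmf (Pair G) Q))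
     \<le> \<delta> + real n * (\<eta> + \<delta>)"
proof (induction n)
  case 0
  show ?case using var_dist_pair_same[OF fD finpmf_map[OF finpmf_unif] fQ, of "enc l" "m l"] encd by simp
next
  case (Suc n)
  define J where "J = bind_pmf D (\<lambda>G. map_pmf (Pair G) (chain enc m s l G n))"
  define T where "T = bind_pmf D (\<lambda>G. map_pmf (Pair G) Q)"
  define K where "K = (\<lambda>(G :: bool list \<Rightarrow> bool list, x). map_pmf (\<lambda>E. (G, enc l (G x @ E))) (unif_bits (s l)))"
  define K2 where "K2 = (\<lambda>(G :: bool list \<Rightarrow> bool list, y). map_pmf (\<lambda>E. (G, enc l (y @ E))) (unif_bits (s l)))"
  define LH where "LH = bind_pmf D (\<lambda>G. map_pmf (\<lambda>x. (G, G x)) Q)"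
  define UR where "UR = bind_pmf D (\<lambda>G. map_pmf (Pair G) (unif_bits r))"
  have fch: "finpmf (chain enc m s l G n)" for G
    by (induction n) (auto intro!: finpmf_map finpmf_bind finpmf_unif)
  have fJ: "finpmf J" unfolding J_def using fD fch by (auto intro!: finpmf_bind finpmf_map)
  have fT: "finpmf T" unfolding T_def using fD fQ by (auto intro!: finpmf_bind finpmf_map)
  have fK: "finpmf (K z)" for z unfolding K_def by (auto intro!: finpmf_map finpmf_unif split: prod.splits)
  have fK2: "finpmf (K2 z)" for z unfolding K2_def by (auto intro!: finpmf_map finpmf_unif split: prod.splits)
  have fLH: "finpmf LH" unfolding LH_def using fD fQ by (auto intro!: finpmf_bind finpmf_map)
  have fUR: "finpmf UR" unfolding UR_def using fD by (auto intro!: finpmf_bind finpmf_map finpmf_unif)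
  have J1: "bind_pmf D (\<lambda>G. map_pmf (Pair G) (chain enc m s l G (Suc n))) = bind_pmf J K"
    unfolding J_def K_def by (simp add: bind_assoc_pmf bind_map_pmf map_bind_pmf map_pmf_comp)
  have T1: "bind_pmf T K = bind_pmf LH K2"
    unfolding T_def K_def LH_def K2_def by (simp add: bind_assoc_pmf bind_map_pmf map_bind_pmf map_pmf_comp)
  have U1: "bind_pmf UR K2 = bind_pmf D (\<lambda>G. map_pmf (Pair G) (map_pmf (enc l) (unif_bits (m l))))"
  proof -
    have "bind_pmf UR K2 = bind_pmf D (\<lambda>G. map_pmf (Pair G) (map_pmf (enc l)
        (bind_pmf (unif_bits r) (\<lambda>y. map_pmf (\<lambda>E. y @ E) (unif_bits (s l))))))"
      unfolding UR_def K2_def by (simp add: bind_assoc_pmf bind_map_pmf map_bind_pmf map_pmf_comp)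
    then show ?thesis by (simp add: unif_append rs)
  qed
  have "var_dist (bind_pmf J K) T \<le> var_dist (bind_pmf J K) (bind_pmf T K) + var_dist (bind_pmf T K) T"
    by (rule var_dist_triangle) (use fJ fT fK in \<open>auto intro!: finpmf_bind\<close>)
  also have "\<dots> \<le> var_dist J T + (\<eta> + \<delta>)"
  proof (rule add_mono)
    show "var_dist (bind_pmf J K) (bind_pmf T K) \<le> var_dist J T"
      by (rule var_dist_bind_le[OF fJ fT]) (rule fK)
    have "var_dist (bind_pmf LH K2) T \<le> var_dist (bind_pmf LH K2) (bind_pmf UR K2) + var_dist (bind_pmf UR K2) T"
      by (rule var_dist_triangle) (use fLH fUR fK2 fT in \<open>auto intro!: finpmf_bind\<close>)
    also have "\<dots> \<le> \<eta> + \<delta>"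
    proof (rule add_mono)
      show "var_dist (bind_pmf LH K2) (bind_pmf UR K2) \<le> \<eta>"
        using var_dist_bind_le[OF fLH fUR, of K2] fK2 lhl unfolding LH_def UR_def by fastforce
      show "var_dist (bind_pmf UR K2) T \<le> \<delta>"
        unfolding U1 T_def using var_dist_pair_same[OF fD finpmf_map[OF finpmf_unif] fQ, of "enc l" "m l"] encd by linarith
    qed
    finally show "var_dist (bind_pmf T K) T \<le> \<eta> + \<delta>" by (simp add: T1)
  qed
  finally have X: "var_dist (bind_pmf J K) T \<le> var_dist J T + (\<eta> + \<delta>)" .
  have IH: "var_dist J T \<le> \<delta> + real n * (\<eta> + \<delta>)" using Suc.IH unfolding J_def T_def .
  show ?case unfolding J1 T_def[symmetric] using X IH by (simp add: algebra_simps)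
qed


lemma card_bits: "card {xs :: bool list. length xs = n} = 2 ^ n"
  using card_lists_length_eq[of "UNIV :: bool set" n] by simp

lemma sum_ind_Y:
  assumes "length (g x) = r"
  shows "(\<Sum>y\<in>{xs :: bool list. length xs = r}. (if g x = y then 1 else 0 :: real)) = 1"
  using assms finite_bits[of r] by (simp add: sum.delta)

lemma lhl:
  fixes F :: "(bool list \<Rightarrow> bool list) set" and Q :: "bool list pmf"
  assumes tu: "two_universal N r F"
    and sQ: "set_pmf Q \<subseteq> {xs. length xs = N}"
    and beta: "real (2 ^ r) * \<beta> \<le> \<gamma>" and beta0: "\<beta> \<ge> 0"
  shows "var_dist (bind_pmf (pmf_of_set F) (\<lambda>G. map_pmf (\<lambda>x. (G, G x)) Q))
                  (bind_pmf (pmf_of_set F) (\<lambda>G. map_pmf (Pair G) (unif_bits r)))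
         \<le> sqrt \<gamma> + 2 * (\<Sum>x\<in>{x. length x = N \<and> \<beta> < pmf Q x}. pmf Q x)"
proof -
  define S where "S = {xs :: bool list. length xs = N}"
  define Y where "Y = {xs :: bool list. length xs = r}"
  define T where "T = {x\<in>S. pmf Q x \<le> \<beta>}"
  define C where "C = {x\<in>S. \<beta> < pmf Q x}"
  define nF where "nF = real (card F)"
  define q where "q = pmf Q"
  define ind :: "(bool list \<Rightarrow> bool list) \<Rightarrow> bool list \<Rightarrow> bool list \<Rightarrow> real"
    where "ind = (\<lambda>g x y. if g x = y then 1 else 0)"
  define p where "p = (\<lambda>A g y. (\<Sum>x\<in>A. q x * ind g x y) / nF)"
  define c where "c = (\<Sum>x\<in>T. q x)"
  define u where "u = 1 / (nF * 2 ^ r)"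
  define P where "P = bind_pmf (pmf_of_set F) (\<lambda>G. map_pmf (\<lambda>x. (G, G x)) Q)"
  define U where "U = bind_pmf (pmf_of_set F) (\<lambda>G. map_pmf (Pair G) (unif_bits r))"
  have fF: "finite F" and neF: "F \<noteq> {}" and glen: "\<And>g x. g \<in> F \<Longrightarrow> length x = N \<Longrightarrow> length (g x) = r"
    and coll: "\<And>x x'. length x = N \<Longrightarrow> length x' = N \<Longrightarrow> x \<noteq> x' \<Longrightarrow> real (card {g\<in>F. g x = g x'}) \<le> real (card F) / 2 ^ r"
    using tu unfolding two_universal_def by auto
  have nF_pos: "nF > 0" unfolding nF_def using fF neF by (simp add: card_gt_0_iff)
  have fS: "finite S" and fY: "finite Y" unfolding S_def Y_def by (auto intro: finite_bits)
  have cY: "real (card Y) = 2 ^ r" unfolding Y_def by (simp add: card_bits)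
  have TS: "T \<subseteq> S" "C \<subseteq> S" "T \<inter> C = {}" "T \<union> C = S" unfolding T_def C_def by auto
  have fT: "finite T" "finite C" using TS fS finite_subset by auto
  have q_nonneg: "\<And>x. q x \<ge> 0" unfolding q_def by simp
  have sumS: "(\<Sum>x\<in>S. q x) = 1" unfolding q_def S_def by (rule sum_pmf_eq_1) (use sQ fS S_def in auto)
  have sumC: "(\<Sum>x\<in>C. q x) = 1 - c"
    using sumS sum.union_disjoint[OF fT(1) fT(2) TS(3), of q] TS(4) unfolding c_def by simp
  have "(\<Sum>x\<in>C. q x) \<ge> 0" "c \<ge> 0" unfolding c_def using q_nonneg by (auto intro: sum_nonneg)
  then have c_le: "c \<le> 1" "c \<ge> 0" using sumC by auto
  have setP: "set_pmf P \<subseteq> F \<times> Y" unfolding P_def Y_def using sQ fF neF glen by (auto simp: set_bind_pmf)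
  have setU: "set_pmf U \<subseteq> F \<times> Y" unfolding U_def Y_def using fF neF by (auto simp: set_bind_pmf set_unif)
  have pmfP: "pmf P (g, y) = p S g y" if "g \<in> F" for g y
  proof -
    have "pmf P (g, y) = (\<Sum>G\<in>F. pmf (pmf_of_set F) G * pmf (map_pmf (\<lambda>x. (G, G x)) Q) (g, y))"
      unfolding P_def by (rule pmf_bind_fin) (use fF neF in auto)
    also have "\<dots> = (\<Sum>G\<in>F. (if G = g then (1 / nF) * (\<Sum>x\<in>S. q x * ind g x y) else 0))"
    proof (rule sum.cong[OF refl])
      fix G assume "G \<in> F"
      have "pmf (map_pmf (\<lambda>x. (G, G x)) Q) (g, y) = (\<Sum>x\<in>S. q x * pmf (return_pmf (G, G x)) (g, y))"
        unfolding map_pmf_def q_def by (rule pmf_bind_fin) (use fS sQ S_def in auto)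
      also have "\<dots> = (if G = g then (\<Sum>x\<in>S. q x * ind g x y) else 0)"
        by (auto simp: ind_def intro!: sum.cong)
      finally show "pmf (pmf_of_set F) G * pmf (map_pmf (\<lambda>x. (G, G x)) Q) (g, y)
          = (if G = g then (1 / nF) * (\<Sum>x\<in>S. q x * ind g x y) else 0)"
        using \<open>G \<in> F\<close> fF neF by (simp add: nF_def)
    qed
    also have "\<dots> = p S g y" using that fF by (simp add: sum.delta' p_def)
    finally show ?thesis .
  qed
  have pmfU: "pmf U (g, y) = u" if "g \<in> F" "y \<in> Y" for g y
  proof -
    have "pmf U (g, y) = (\<Sum>G\<in>F. pmf (pmf_of_set F) G * pmf (map_pmf (Pair G) (unif_bits r)) (g, y))"
      unfolding U_def by (rule pmf_bind_fin) (use fF neF in auto)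
    also have "\<dots> = (\<Sum>G\<in>F. (if G = g then (1 / nF) * (1 / 2 ^ r) else 0))"
    proof (rule sum.cong[OF refl])
      fix G assume "G \<in> F"
      have "pmf (map_pmf (Pair G) (unif_bits r)) (g, y) = (if G = g then pmf (unif_bits r) y else 0)"
        by (auto simp: pmf_map_inj' inj_on_def pmf_eq_0_set_pmf)
      also have "\<dots> = (if G = g then 1 / 2 ^ r else 0)"
        using that finite_bits[of r] bits_nonempty[of r] by (simp add: unif_bits_def Y_def card_bits)
      finally show "pmf (pmf_of_set F) G * pmf (map_pmf (Pair G) (unif_bits r)) (g, y)
          = (if G = g then (1 / nF) * (1 / 2 ^ r) else 0)"
        using \<open>G \<in> F\<close> fF neF by (simp add: nF_def)
    qed
    also have "\<dots> = u" using that fF by (simp add: sum.delta' u_def)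
    finally show ?thesis .
  qed
  have sum_p: "(\<Sum>g\<in>F. \<Sum>y\<in>Y. p A g y) = (\<Sum>x\<in>A. q x)" if "A \<subseteq> S" for A
  proof -
    have fA: "finite A" using that fS finite_subset by auto
    have "(\<Sum>g\<in>F. \<Sum>y\<in>Y. p A g y) = (\<Sum>g\<in>F. (\<Sum>x\<in>A. q x * (\<Sum>y\<in>Y. ind g x y)) / nF)"
      unfolding p_def by (simp add: sum_divide_distrib[symmetric] sum_distrib_left sum.swap[of _ Y])
    also have "\<dots> = (\<Sum>g\<in>F. (\<Sum>x\<in>A. q x) / nF)"
    proof (intro sum.cong refl arg_cong2[where f="(/)"])
      fix g x assume "g \<in> F" "x \<in> A"
      then show "q x * (\<Sum>y\<in>Y. ind g x y) = q x"
        using sum_ind_Y[of g x r] glen that unfolding ind_def Y_def S_def by auto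
    qed
    also have "\<dots> = (\<Sum>x\<in>A. q x)" using nF_pos by (simp add: nF_def)
    finally show ?thesis .
  qed
  have cDom: "real (card (F \<times> Y)) = nF * 2 ^ r" using cY by (simp add: card_cartesian_product nF_def)
  have u_sum: "(\<Sum>g\<in>F. \<Sum>y\<in>Y. u) = 1" using cY nF_pos by (simp add: u_def nF_def)
  have pST: "p S g y = p T g y + p C g y" for g y
    unfolding p_def using sum.union_disjoint[OF fT(1) fT(2) TS(3), of "\<lambda>x. q x * ind g x y"] TS(4)
    by (simp add: add_divide_distrib)
  have pC_nonneg: "p C g y \<ge> 0" for g y
    unfolding p_def using nF_pos q_nonneg by (auto intro!: divide_nonneg_pos sum_nonneg simp: ind_def)
  have u_nonneg: "u \<ge> 0" unfolding u_def using nF_pos by simp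
  have "var_dist P U = (\<Sum>z\<in>F \<times> Y. \<bar>pmf P z - pmf U z\<bar>)"
    by (rule var_dist_fin) (use setP setU fF fY in auto)
  also have "\<dots> = (\<Sum>g\<in>F. \<Sum>y\<in>Y. \<bar>p S g y - u\<bar>)"
    by (simp add: sum.cartesian_product) (intro sum.cong refl, auto simp: pmfP pmfU)
  also have "\<dots> \<le> (\<Sum>g\<in>F. \<Sum>y\<in>Y. \<bar>p T g y - c * u\<bar> + p C g y + (1 - c) * u)"
  proof (intro sum_mono)
    fix g y
    have "\<bar>p S g y - u\<bar> = \<bar>(p T g y - c * u) + p C g y - (1 - c) * u\<bar>"
      by (simp add: pST algebra_simps)
    also have "\<dots> \<le> \<bar>p T g y - c * u\<bar> + p C g y + (1 - c) * u"
      using pC_nonneg[of g y] u_nonneg c_le by (simp add: abs_le_iff) (smt (verit) mult_nonneg_nonneg)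
    finally show "\<bar>p S g y - u\<bar> \<le> \<bar>p T g y - c * u\<bar> + p C g y + (1 - c) * u" .
  qed
  also have "\<dots> = (\<Sum>g\<in>F. \<Sum>y\<in>Y. \<bar>p T g y - c * u\<bar>) + (1 - c) + (1 - c)"
  proof -
    have A: "(\<Sum>g\<in>F. \<Sum>y\<in>Y. (1 - c) * u) = (1 - c)" using u_sum by (simp add: sum_distrib_left[symmetric])
    show ?thesis by (simp only: sum.distrib A sum_p[OF TS(2)] sumC)
  qed
  also have "(\<Sum>g\<in>F. \<Sum>y\<in>Y. \<bar>p T g y - c * u\<bar>) \<le> sqrt \<gamma>"
  proof -
    define a where "a = (\<lambda>z. p T (fst z) (snd z) - c * u)"
    have eqa: "(\<Sum>g\<in>F. \<Sum>y\<in>Y. \<bar>p T g y - c * u\<bar>) = (\<Sum>z\<in>F \<times> Y. \<bar>a z\<bar>)"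
      by (simp add: sum.cartesian_product a_def case_prod_beta)
    have CS: "(\<Sum>z\<in>F \<times> Y. \<bar>a z\<bar>)\<^sup>2 \<le> (\<Sum>z\<in>F \<times> Y. (a z)\<^sup>2) * (nF * 2 ^ r)"
      using sum_squared_le_sum_of_squares[of "\<lambda>z. \<bar>a z\<bar>" "F \<times> Y"] cDom by simp
    have sq: "(\<Sum>z\<in>F \<times> Y. (a z)\<^sup>2) = (\<Sum>g\<in>F. \<Sum>y\<in>Y. (p T g y)\<^sup>2) - c\<^sup>2 * u"
    proof -
      have "(\<Sum>z\<in>F \<times> Y. (a z)\<^sup>2) = (\<Sum>g\<in>F. \<Sum>y\<in>Y. (p T g y)\<^sup>2 - 2 * (c * u) * p T g y + (c * u)\<^sup>2)"
        by (simp add: sum.cartesian_product a_def power2_diff case_prod_beta) (intro sum.cong refl, simp add: algebra_simps)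
      also have "\<dots> = (\<Sum>g\<in>F. \<Sum>y\<in>Y. (p T g y)\<^sup>2) - 2 * (c * u) * (\<Sum>g\<in>F. \<Sum>y\<in>Y. p T g y) + (c * u)\<^sup>2 * (\<Sum>g\<in>F. \<Sum>y\<in>Y. 1)"
        by (simp add: sum.distrib sum_subtractf sum_distrib_left)
      also have "(\<Sum>g\<in>F. \<Sum>y\<in>Y. p T g y) = c" using sum_p[OF TS(1)] by (simp add: c_def)
      also have "(\<Sum>g\<in>F. \<Sum>y\<in>Y. (1::real)) = nF * 2 ^ r" using cY by (simp add: nF_def)
      finally show ?thesis using nF_pos by (simp add: u_def power2_eq_square field_simps)
    qed
    have sqT: "(\<Sum>g\<in>F. \<Sum>y\<in>Y. (p T g y)\<^sup>2) \<le> ((\<Sum>x\<in>T. (q x)\<^sup>2) + c\<^sup>2 / 2 ^ r) / nF"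
    proof -
      have "(\<Sum>g\<in>F. \<Sum>y\<in>Y. (p T g y)\<^sup>2) = (\<Sum>g\<in>F. \<Sum>x\<in>T. \<Sum>x'\<in>T. q x * q x' * (\<Sum>y\<in>Y. ind g x y * ind g x' y)) / nF\<^sup>2"
        unfolding p_def
        by (simp add: power_divide sum_divide_distrib[symmetric] power2_eq_square sum_product sum_distrib_left
                      sum.swap[of _ Y] mult_ac)
      also have "\<dots> = (\<Sum>g\<in>F. \<Sum>x\<in>T. \<Sum>x'\<in>T. q x * q x' * (if g x = g x' then 1 else 0)) / nF\<^sup>2"
      proof (intro arg_cong2[where f="(/)"] sum.cong refl)
        fix g x x' assume "g \<in> F" "x \<in> T" "x' \<in> T"
        then have "length (g x) = r" using glen TS unfolding S_def by auto
        have "(\<Sum>y\<in>Y. ind g x y * ind g x' y) = (\<Sum>y\<in>Y. if y = g x then (if g x = g x' then 1 else 0) else 0)"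
          by (intro sum.cong refl) (auto simp: ind_def)
        also have "\<dots> = (if g x = g x' then 1 else 0)"
          using fY \<open>length (g x) = r\<close> by (simp add: sum.delta' Y_def)
        finally have "(\<Sum>y\<in>Y. ind g x y * ind g x' y) = (if g x = g x' then 1 else 0)" .
        then show "q x * q x' * (\<Sum>y\<in>Y. ind g x y * ind g x' y) = q x * q x' * (if g x = g x' then 1 else 0)" by simp
      qed
      also have "\<dots> = (\<Sum>x\<in>T. \<Sum>x'\<in>T. q x * q x' * real (card {g\<in>F. g x = g x'})) / nF\<^sup>2"
      proof -
        have "(\<Sum>g\<in>F. \<Sum>x\<in>T. \<Sum>x'\<in>T. q x * q x' * (if g x = g x' then 1 else 0))
            = (\<Sum>x\<in>T. \<Sum>g\<in>F. \<Sum>x'\<in>T. q x * q x' * (if g x = g x' then 1 else 0))"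
          by (rule sum.swap)
        also have "\<dots> = (\<Sum>x\<in>T. \<Sum>x'\<in>T. \<Sum>g\<in>F. q x * q x' * (if g x = g x' then 1 else 0))"
          by (intro sum.cong refl) (rule sum.swap)
        also have "\<dots> = (\<Sum>x\<in>T. \<Sum>x'\<in>T. q x * q x' * real (card {g\<in>F. g x = g x'}))"
        proof (intro sum.cong refl)
          fix x x'
          have "(\<Sum>g\<in>F. (if g x = g x' then 1 else 0 :: real)) = real (card {g\<in>F. g x = g x'})"
            using sum.inter_filter[OF fF, of "\<lambda>_. 1::real" "\<lambda>g. g x = g x'"] by simp
          then show "(\<Sum>g\<in>F. q x * q x' * (if g x = g x' then 1 else 0)) = q x * q x' * real (card {g\<in>F. g x = g x'})"
            by (simp add: sum_distrib_left[symmetric])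
        qed
        finally show ?thesis by simp
      qed
      also have "\<dots> \<le> (\<Sum>x\<in>T. \<Sum>x'\<in>T. q x * q x' * ((if x = x' then nF else 0) + nF / 2 ^ r)) / nF\<^sup>2"
      proof (intro divide_right_mono sum_mono mult_left_mono)
        fix x x' assume "x \<in> T" "x' \<in> T"
        then have l: "length x = N" "length x' = N" using TS unfolding S_def by auto
        show "real (card {g\<in>F. g x = g x'}) \<le> (if x = x' then nF else 0) + nF / 2 ^ r"
        proof (cases "x = x'")
          case True
          then show ?thesis using nF_pos by (simp add: nF_def)
        next
          case False
          then show ?thesis using coll[OF l False] by (simp add: nF_def)
        qed
        show "0 \<le> q x * q x'" using q_nonneg by simp
      qed simp
      also have "\<dots> = (nF * (\<Sum>x\<in>T. (q x)\<^sup>2) + nF / 2 ^ r * c\<^sup>2) / nF\<^sup>2"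
      proof -
        have e1: "q x * q x' * ((if x = x' then nF else 0) + nF / 2 ^ r)
            = (if x' = x then nF * (q x)\<^sup>2 else 0) + nF / 2 ^ r * q x * q x'" for x x'
          by (auto simp: power2_eq_square algebra_simps)
        have "(\<Sum>x\<in>T. \<Sum>x'\<in>T. q x * q x' * ((if x = x' then nF else 0) + nF / 2 ^ r))
            = (\<Sum>x\<in>T. nF * (q x)\<^sup>2 + nF / 2 ^ r * q x * c)"
          unfolding e1 using fT by (simp add: sum.distrib sum.delta sum_distrib_left[symmetric] c_def
              sum_divide_distrib[symmetric])
        also have "\<dots> = nF * (\<Sum>x\<in>T. (q x)\<^sup>2) + nF / 2 ^ r * c\<^sup>2"
        proof -
          have "(\<Sum>x\<in>T. nF / 2 ^ r * q x * c) = nF / 2 ^ r * c * (\<Sum>x\<in>T. q x)"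
            by (simp add: sum_distrib_left mult_ac sum_divide_distrib[symmetric])
          then show ?thesis by (simp add: sum.distrib sum_distrib_left[symmetric] c_def power2_eq_square)
        qed
        finally show ?thesis by simp
      qed
      also have "\<dots> = ((\<Sum>x\<in>T. (q x)\<^sup>2) + c\<^sup>2 / 2 ^ r) / nF"
        using nF_pos by (simp add: power2_eq_square field_simps)
      finally show ?thesis .
    qed
    have qT: "(\<Sum>x\<in>T. (q x)\<^sup>2) \<le> \<beta>"
    proof -
      have "(\<Sum>x\<in>T. (q x)\<^sup>2) \<le> (\<Sum>x\<in>T. \<beta> * q x)"
        by (intro sum_mono) (auto simp: T_def power2_eq_square q_def intro: mult_right_mono)
      also have "\<dots> = \<beta> * c" by (simp add: c_def sum_distrib_left)
      also have "\<dots> \<le> \<beta>" using c_le beta0 mult_left_le by blast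
      finally show ?thesis .
    qed
    have "(\<Sum>z\<in>F \<times> Y. (a z)\<^sup>2) * (nF * 2 ^ r) \<le> (((\<Sum>x\<in>T. (q x)\<^sup>2) + c\<^sup>2 / 2 ^ r) / nF - c\<^sup>2 * u) * (nF * 2 ^ r)"
      using sq sqT nF_pos by (intro mult_right_mono) auto
    also have "\<dots> = 2 ^ r * (\<Sum>x\<in>T. (q x)\<^sup>2)"
      using nF_pos by (simp add: u_def field_simps)
    also have "\<dots> \<le> 2 ^ r * \<beta>" using qT by simp
    also have "\<dots> \<le> \<gamma>" using beta by simp
    finally have "(\<Sum>z\<in>F \<times> Y. \<bar>a z\<bar>)\<^sup>2 \<le> \<gamma>" using CS by linarith
    then show ?thesis unfolding eqa by (rule real_le_rsqrt)
  qed
  finally have "var_dist P U \<le> sqrt \<gamma> + 2 * (1 - c)" by simp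
  moreover have "1 - c = (\<Sum>x\<in>{x. length x = N \<and> \<beta> < pmf Q x}. pmf Q x)"
    using sumC unfolding C_def S_def q_def by simp
  ultimately show ?thesis unfolding P_def U_def by simp
qed


lemma exp_neg_le_quad:
  assumes "(y::real) \<ge> 0" shows "exp (- y) \<le> 1 - y + y\<^sup>2 / 2"
proof -
  let ?f = "\<lambda>y::real. 1 - y + y\<^sup>2 / 2 - exp (- y)"
  have "?f 0 \<le> ?f y"
  proof (rule DERIV_nonneg_imp_nondecreasing[OF assms])
    fix x :: real assume "0 \<le> x" "x \<le> y"
    have "(?f has_real_derivative (-1 + x + exp (- x))) (at x)"
      by (auto intro!: derivative_eq_intros simp: power2_eq_square)
    moreover have "0 \<le> -1 + x + exp (- x)" using exp_ge_add_one_self[of "- x"] by linarith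
    ultimately show "\<exists>d. (?f has_real_derivative d) (at x) \<and> 0 \<le> d" by blast
  qed
  then show ?thesis by simp
qed

lemma e_ge: "exp (1::real) \<ge> 5 / 2"
  using exp_lower_Taylor_quadratic[of 1] by simp

lemma s_ln_bound:
  assumes "(s::real) > 0" shows "s * ln (1 / s) \<le> 1 / exp 1"
proof -
  have "ln (1 / s) - 1 = ln ((1 / s) / exp 1)" using assms by (simp add: ln_div ln_mult)
  also have "\<dots> \<le> (1 / s) / exp 1 - 1" using assms by (intro ln_le_minus_one) simp
  finally have "ln (1 / s) \<le> (1 / s) / exp 1" by simp
  then have "s * ln (1 / s) \<le> s * ((1 / s) / exp 1)" using assms by (intro mult_left_mono) auto
  also have "\<dots> = 1 / exp 1" using assms by simp
  finally show ?thesis .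
qed

lemma t_ln2_bound:
  assumes "(t::real) > 0" "t \<le> 1" shows "t * (ln t)\<^sup>2 \<le> 16 / 25"
proof -
  define s where "s = sqrt t"
  have s0: "s > 0" "s \<le> 1" using assms by (auto simp: s_def)
  have t_eq: "t = s\<^sup>2" using assms by (simp add: s_def)
  have "ln t = 2 * ln s" using s0 by (simp add: t_eq ln_realpow)
  then have "t * (ln t)\<^sup>2 = 4 * (s * ln (1 / s))\<^sup>2" using s0 by (simp add: t_eq ln_div power2_eq_square)
  also have "\<dots> \<le> 4 * (1 / exp 1)\<^sup>2"
  proof -
    have "0 \<le> s * ln (1 / s)" using s0 by (intro mult_nonneg_nonneg) auto
    then show ?thesis using s_ln_bound[OF s0(1)] by (intro mult_left_mono power_mono) auto
  qed
  also have "\<dots> \<le> 4 * (2 / 5)\<^sup>2"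
    using e_ge by (intro mult_left_mono power_mono) (auto simp: field_simps)
  finally show ?thesis by (simp add: power2_eq_square)
qed

lemma mgf_bound:
  fixes p :: "bool pmf" and lam :: real
  assumes lam: "lam \<ge> 0"
  shows "(\<Sum>b\<in>UNIV. pmf p b powr (1 + lam)) \<le> exp (- lam * (ln 2 * entropy2 p) + lam\<^sup>2 * (13 / 10) / 2)"
proof -
  define t where "t = pmf p"
  define u where "u = (\<lambda>b. - ln (t b))"
  have tb: "t b powr (1 + lam) \<le> t b * (1 - lam * u b + (lam * u b)\<^sup>2 / 2)" for b
  proof (cases "t b = 0")
    case True then show ?thesis by simp
  next
    case False
    then have tp: "t b > 0" by (simp add: t_def order.not_eq_order_implies_strict)
    have t1: "t b \<le> 1" by (simp add: t_def pmf_le_1)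
    have u0: "u b \<ge> 0" using tp t1 by (simp add: u_def)
    have "t b powr (1 + lam) = t b * exp (- (lam * u b))"
      using tp by (simp add: powr_def u_def algebra_simps exp_add)
    also have "\<dots> \<le> t b * (1 - lam * u b + (lam * u b)\<^sup>2 / 2)"
      using tp u0 lam by (intro mult_left_mono exp_neg_le_quad) auto
    finally show ?thesis .
  qed
  have sum1: "(\<Sum>b\<in>UNIV. t b) = 1" unfolding t_def by (rule sum_pmf_eq_1) auto
  have Hsum: "(\<Sum>b\<in>UNIV. t b * u b) = ln 2 * entropy2 p"
  proof -
    have "entropy2 p = - (\<Sum>b\<in>UNIV. t b * log 2 (t b))"
      unfolding entropy2_def t_def
      by (subst sum.mono_neutral_left[of UNIV "set_pmf p"]) (auto simp: set_pmf_eq)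
    then show ?thesis by (simp add: u_def log_def sum_distrib_left[symmetric] sum_negf sum_divide_distrib[symmetric])
  qed
  have Msum: "(\<Sum>b\<in>UNIV. t b * (u b)\<^sup>2) \<le> 13 / 10"
  proof -
    have "(\<Sum>b\<in>UNIV. t b * (u b)\<^sup>2) \<le> (\<Sum>b\<in>(UNIV :: bool set). 16 / 25)"
    proof (intro sum_mono)
      fix b
      show "t b * (u b)\<^sup>2 \<le> 16 / 25"
      proof (cases "t b = 0")
        case True then show ?thesis by simp
      next
        case False
        then have "t b > 0" by (simp add: t_def order.not_eq_order_implies_strict)
        then show ?thesis using t_ln2_bound[of "t b"] by (simp add: u_def t_def pmf_le_1)
      qed
    qed
    then show ?thesis by simp
  qed
  have "(\<Sum>b\<in>UNIV. pmf p b powr (1 + lam)) \<le> (\<Sum>b\<in>UNIV. t b * (1 - lam * u b + (lam * u b)\<^sup>2 / 2))"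
    unfolding t_def[symmetric] by (intro sum_mono tb)
  also have "\<dots> = (\<Sum>b\<in>UNIV. t b) - lam * (\<Sum>b\<in>UNIV. t b * u b) + lam\<^sup>2 / 2 * (\<Sum>b\<in>UNIV. t b * (u b)\<^sup>2)"
    by (simp add: sum.distrib sum_subtractf sum_distrib_left algebra_simps power2_eq_square)
  also have "\<dots> \<le> 1 - lam * (ln 2 * entropy2 p) + lam\<^sup>2 / 2 * (13 / 10)"
  proof -
    have "lam\<^sup>2 / 2 * (\<Sum>b\<in>UNIV. t b * (u b)\<^sup>2) \<le> lam\<^sup>2 / 2 * (13 / 10)"
      using Msum by (intro mult_left_mono) auto
    then show ?thesis using sum1 Hsum by simp
  qed
  also have "\<dots> \<le> exp (- lam * (ln 2 * entropy2 p) + lam\<^sup>2 * (13 / 10) / 2)"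
    using exp_ge_add_one_self[of "- lam * (ln 2 * entropy2 p) + lam\<^sup>2 * (13 / 10) / 2"] by (simp add: algebra_simps)
  finally show ?thesis .
qed

lemma pmf_replicate_bool:
  fixes p :: "bool pmf"
  shows "length xs = n \<Longrightarrow> pmf (replicate_pmf n p) xs = prod_list (map (pmf p) xs)"
proof (induction n arbitrary: xs)
  case 0 then show ?case by simp
next
  case (Suc n)
  then obtain b ys where xs: "xs = b # ys" and ly: "length ys = n" by (cases xs) auto
  have "replicate_pmf (Suc n) p = bind_pmf p (\<lambda>x. map_pmf (Cons x) (replicate_pmf n p))"
    by (simp add: map_pmf_def)
  then have "pmf (replicate_pmf (Suc n) p) xs = (\<Sum>x\<in>UNIV. pmf p x * pmf (map_pmf (Cons x) (replicate_pmf n p)) (b # ys))"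
    by (simp add: xs pmf_bind_fin[of UNIV])
  also have "\<dots> = (\<Sum>x\<in>UNIV. if x = b then pmf p b * pmf (replicate_pmf n p) ys else 0)"
  proof (intro sum.cong refl)
    fix x
    show "pmf p x * pmf (map_pmf (Cons x) (replicate_pmf n p)) (b # ys) = (if x = b then pmf p b * pmf (replicate_pmf n p) ys else 0)"
    proof (cases "x = b")
      case True then show ?thesis by (simp add: pmf_map_inj' inj_on_def)
    next
      case False
      then have "pmf (map_pmf (Cons x) (replicate_pmf n p)) (b # ys) = 0" by (auto simp: pmf_eq_0_set_pmf)
      then show ?thesis using False by simp
    qed
  qed
  also have "\<dots> = pmf p b * pmf (replicate_pmf n p) ys" by simp
  finally show ?case using Suc.IH[OF ly] by (simp add: xs)
qed

lemma sum_lists_prod: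
  fixes f :: "bool \<Rightarrow> real"
  shows "(\<Sum>xs\<in>{xs. length xs = n}. prod_list (map f xs)) = (\<Sum>b\<in>UNIV. f b) ^ n"
proof (induction n)
  case 0 then show ?case by simp
next
  case (Suc n)
  have eq: "{xs :: bool list. length xs = Suc n} = (\<lambda>(b, ys). b # ys) ` (UNIV \<times> {ys. length ys = n})"
    by (auto simp: length_Suc_conv image_iff)
  have inj: "inj_on (\<lambda>(b, ys). b # ys) (UNIV \<times> {ys :: bool list. length ys = n})"
    by (auto simp: inj_on_def)
  have "(\<Sum>xs\<in>{xs. length xs = Suc n}. prod_list (map f xs))
      = (\<Sum>z\<in>UNIV \<times> {ys. length ys = n}. prod_list (map f ((\<lambda>(b, ys). b # ys) z)))"
    unfolding eq by (rule sum.reindex[OF inj, unfolded comp_def])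
  also have "\<dots> = (\<Sum>b\<in>UNIV. \<Sum>ys\<in>{ys. length ys = n}. f b * prod_list (map f ys))"
    by (simp add: sum.cartesian_product case_prod_beta)
  also have "\<dots> = (\<Sum>b\<in>UNIV. f b) ^ Suc n"
    by (simp add: sum_distrib_left[symmetric] Suc.IH sum_distrib_right[symmetric])
  finally show ?case .
qed

lemma conc_markov:
  fixes p :: "bool pmf" and \<beta> lam :: real
  assumes beta: "\<beta> > 0" and lam: "lam \<ge> 0"
  shows "(\<Sum>x\<in>{x. length x = N \<and> \<beta> < pmf (replicate_pmf N p) x}. pmf (replicate_pmf N p) x)
     \<le> \<beta> powr (- lam) * (\<Sum>b\<in>UNIV. pmf p b powr (1 + lam)) ^ N"
proof -
  let ?Q = "replicate_pmf N p"
  have "(\<Sum>x\<in>{x. length x = N \<and> \<beta> < pmf ?Q x}. pmf ?Q x)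
      \<le> (\<Sum>x\<in>{x. length x = N \<and> \<beta> < pmf ?Q x}. \<beta> powr (- lam) * pmf ?Q x powr (1 + lam))"
  proof (intro sum_mono)
    fix x assume "x \<in> {x. length x = N \<and> \<beta> < pmf ?Q x}"
    then have bq: "\<beta> < pmf ?Q x" by auto
    then have q0: "pmf ?Q x > 0" using beta by linarith
    have "1 \<le> (pmf ?Q x / \<beta>) powr lam"
      using bq beta lam by (intro ge_one_powr_ge_zero) (auto simp: field_simps)
    then have "pmf ?Q x \<le> pmf ?Q x * (pmf ?Q x / \<beta>) powr lam"
      using q0 by (simp add: mult_le_cancel_left1)
    also have "\<dots> = \<beta> powr (- lam) * pmf ?Q x powr (1 + lam)"
      using q0 beta by (simp add: powr_divide powr_add powr_minus field_simps)
    finally show "pmf ?Q x \<le> \<beta> powr (- lam) * pmf ?Q x powr (1 + lam)" .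
  qed
  also have "\<dots> \<le> (\<Sum>x\<in>{x. length x = N}. \<beta> powr (- lam) * pmf ?Q x powr (1 + lam))"
    by (intro sum_mono2 finite_bits) auto
  also have "\<dots> = \<beta> powr (- lam) * (\<Sum>x\<in>{x. length x = N}. prod_list (map (\<lambda>b. pmf p b powr (1 + lam)) x))"
  proof -
    have "pmf ?Q x powr (1 + lam) = prod_list (map (\<lambda>b. pmf p b powr (1 + lam)) x)" if "length x = N" for x
    proof -
      have "pmf ?Q x powr (1 + lam) = prod_list (map (pmf p) x) powr (1 + lam)"
        using that by (simp add: pmf_replicate_bool)
      also have "\<dots> = prod_list (map (\<lambda>b. pmf p b powr (1 + lam)) x)"
        by (induction x) (auto simp: powr_mult)
      finally show ?thesis .
    qed
    then show ?thesis by (simp add: sum_distrib_left)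
  qed
  also have "\<dots> = \<beta> powr (- lam) * (\<Sum>b\<in>UNIV. pmf p b powr (1 + lam)) ^ N"
    by (simp add: sum_lists_prod)
  finally show ?thesis .
qed


lemma sum_marginal:
  assumes "finpmf P"
  shows "(\<Sum>z\<in>set_pmf P. pmf P z * f (g z)) = (\<Sum>a\<in>set_pmf (map_pmf g P). pmf (map_pmf g P) a * f a)"
proof -
  have fS: "finite (set_pmf P)" using assms by (simp add: finpmf_def)
  have "measure_pmf.expectation (map_pmf g P) f = measure_pmf.expectation P (\<lambda>z. f (g z))"
    by (rule integral_map_pmf)
  moreover have "measure_pmf.expectation P (\<lambda>z. f (g z)) = (\<Sum>z\<in>set_pmf P. pmf P z * f (g z))"
    by (subst integral_measure_pmf[OF fS]) auto
  moreover have "measure_pmf.expectation (map_pmf g P) f = (\<Sum>a\<in>set_pmf (map_pmf g P). pmf (map_pmf g P) a * f a)"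
    by (subst integral_measure_pmf[of "set_pmf (map_pmf g P)"]) (use fS in auto)
  ultimately show ?thesis by simp
qed

lemma entropy2_subadd:
  fixes P :: "('a \<times> 'b) pmf"
  assumes fP: "finpmf P"
  shows "entropy2 P \<le> entropy2 (map_pmf fst P) + entropy2 (map_pmf snd P)"
proof -
  let ?S = "set_pmf P" and ?P1 = "map_pmf fst P" and ?P2 = "map_pmf snd P"
  have fS: "finite ?S" using fP by (simp add: finpmf_def)
  have pos1: "pmf ?P1 (fst z) > 0" if "z \<in> ?S" for z
    using that by (simp add: pmf_positive)
  have pos2: "pmf ?P2 (snd z) > 0" if "z \<in> ?S" for z
    using that by (simp add: pmf_positive)
  have pos: "pmf P z > 0" if "z \<in> ?S" for z using that by (simp add: pmf_positive)
  have H1: "entropy2 ?P1 = - (\<Sum>z\<in>?S. pmf P z * log 2 (pmf ?P1 (fst z)))"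
    unfolding entropy2_def using sum_marginal[OF fP, of "\<lambda>a. log 2 (pmf ?P1 a)" fst] by simp
  have H2: "entropy2 ?P2 = - (\<Sum>z\<in>?S. pmf P z * log 2 (pmf ?P2 (snd z)))"
    unfolding entropy2_def using sum_marginal[OF fP, of "\<lambda>a. log 2 (pmf ?P2 a)" snd] by simp
  have "entropy2 P - entropy2 ?P1 - entropy2 ?P2
      = (\<Sum>z\<in>?S. pmf P z * ln (pmf ?P1 (fst z) * pmf ?P2 (snd z) / pmf P z)) / ln 2"
  proof -
    have "entropy2 P - entropy2 ?P1 - entropy2 ?P2
        = (\<Sum>z\<in>?S. pmf P z * (log 2 (pmf ?P1 (fst z)) + log 2 (pmf ?P2 (snd z)) - log 2 (pmf P z)))"
      unfolding H1 H2 by (simp add: entropy2_def algebra_simps sum.distrib sum_subtractf)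
    also have "\<dots> = (\<Sum>z\<in>?S. pmf P z * ln (pmf ?P1 (fst z) * pmf ?P2 (snd z) / pmf P z) / ln 2)"
    proof (intro sum.cong refl)
      fix z assume z: "z \<in> ?S"
      have a: "pmf ?P1 (fst z) > 0" "pmf ?P2 (snd z) > 0" "pmf P z > 0" using pos1[OF z] pos2[OF z] pos[OF z] by auto
      then have lneq: "ln (pmf ?P1 (fst z) * pmf ?P2 (snd z) / pmf P z) = ln (pmf ?P1 (fst z)) + ln (pmf ?P2 (snd z)) - ln (pmf P z)"
        by (simp add: ln_div ln_mult)
      show "pmf P z * (log 2 (pmf ?P1 (fst z)) + log 2 (pmf ?P2 (snd z)) - log 2 (pmf P z))
          = pmf P z * ln (pmf ?P1 (fst z) * pmf ?P2 (snd z) / pmf P z) / ln 2"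
        by (simp only: log_def lneq) (simp add: algebra_simps diff_divide_distrib add_divide_distrib)
    qed
    finally show ?thesis by (simp add: sum_divide_distrib)
  qed
  also have "\<dots> \<le> (\<Sum>z\<in>?S. pmf P z * (pmf ?P1 (fst z) * pmf ?P2 (snd z) / pmf P z - 1)) / ln 2"
    by (intro divide_right_mono sum_mono mult_left_mono ln_le_minus_one)
       (use pos1 pos2 pos in auto)
  also have "\<dots> = ((\<Sum>z\<in>?S. pmf ?P1 (fst z) * pmf ?P2 (snd z)) - 1) / ln 2"
  proof -
    have "(\<Sum>z\<in>?S. pmf P z * (pmf ?P1 (fst z) * pmf ?P2 (snd z) / pmf P z - 1))
        = (\<Sum>z\<in>?S. pmf ?P1 (fst z) * pmf ?P2 (snd z) - pmf P z)"
    proof (intro sum.cong refl)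
      fix z assume "z \<in> ?S"
      then have "pmf P z > 0" by (rule pos)
      then show "pmf P z * (pmf ?P1 (fst z) * pmf ?P2 (snd z) / pmf P z - 1) = pmf ?P1 (fst z) * pmf ?P2 (snd z) - pmf P z"
        by (simp add: field_simps)
    qed
    also have "\<dots> = (\<Sum>z\<in>?S. pmf ?P1 (fst z) * pmf ?P2 (snd z)) - 1"
      using sum_pmf_eq_1[OF fS, of P] by (simp add: sum_subtractf)
    finally show ?thesis by simp
  qed
  also have "\<dots> \<le> 0"
  proof -
    have f12: "finite (set_pmf ?P1 \<times> set_pmf ?P2)" using fS by auto
    have "(\<Sum>z\<in>?S. pmf ?P1 (fst z) * pmf ?P2 (snd z)) \<le> (\<Sum>z\<in>set_pmf ?P1 \<times> set_pmf ?P2. pmf ?P1 (fst z) * pmf ?P2 (snd z))"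
      by (intro sum_mono2 f12) (force simp: pmf_positive image_iff)+
    also have "\<dots> = (\<Sum>a\<in>set_pmf ?P1. pmf ?P1 a) * (\<Sum>b\<in>set_pmf ?P2. pmf ?P2 b)"
      by (simp add: sum_product sum.cartesian_product case_prod_beta)
    also have "\<dots> = 1" using fS by (simp add: sum_pmf_eq_1)
    finally show ?thesis by (simp add: divide_nonpos_pos)
  qed
  finally show ?thesis by simp
qed

lemma fst_q_Xl_ZXprev:
  assumes "l \<in> {1..L}"
  shows "map_pmf fst (q_Xl_ZXprev L qX W l) = qX l"
proof -
  have "map_pmf fst (q_Xl_ZXprev L qX W l) = map_pmf (\<lambda>x. x ! (l - 1)) (q_XL L qX)"
    unfolding q_Xl_ZXprev_def q_joint_def
    by (simp add: map_pmf_comp map_bind_pmf case_prod_beta bind_pmf_const flip: map_pmf_def)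
  also have "\<dots> = qX l" unfolding q_XL_def using assms by (subst list_pmf_nth) (auto simp del: upt_Suc)
  finally show ?thesis .
qed

lemma finpmf_q_Xl:
  fixes W :: "bool list \<Rightarrow> 'z::finite pmf"
  shows "finpmf (q_Xl_ZXprev L qX W l)"
  unfolding q_Xl_ZXprev_def q_joint_def q_XL_def
  by (intro finpmf_map finpmf_bind finpmf_list_pmf finpmf_finite_type)

lemma cond_le_entropy:
  fixes W :: "bool list \<Rightarrow> 'z::finite pmf"
  assumes "l \<in> {1..L}"
  shows "cond_entropy2 (q_Xl_ZXprev L qX W l) \<le> entropy2 (qX l)"
    and "cond_entropy2 (q_Xl_ZXprev L qX W l) + mutual_info2 (q_Xl_ZXprev L qX W l) = entropy2 (qX l)"
  using entropy2_subadd[OF finpmf_q_Xl[of L qX W l]] fst_q_Xl_ZXprev[OF assms, of qX W]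
  by (auto simp: cond_entropy2_def mutual_info2_def)


lemma ln2_ge_half: "ln (2::real) \<ge> 1 / 2"
proof -
  have "ln (1 / 2 :: real) \<le> 1 / 2 - 1" by (rule ln_le_minus_one) simp
  then show ?thesis by (simp add: ln_div)
qed

lemma key_exponent:
  fixes L N :: nat
  assumes N: "N > 0"
  defines "te \<equiv> ln 2 * (log 2 (2 ^ L + 3) * sqrt (2 / real N * (real L + log 2 (real N))))"
  shows "ln (real N) \<le> real N * te\<^sup>2 / (26 / 10)" and "te \<ge> 0"
proof -
  define A :: real where "A = 2 ^ L + 3"
  have A4: "A \<ge> 4" unfolding A_def using one_le_power[of "2::real" L] by simp
  have lnA: "ln A \<ge> 2 * ln 2"
  proof -
    have "ln (4::real) \<le> ln A" using A4 by simp
    moreover have "ln (4::real) = 2 * ln 2" using ln_realpow[of 2 2] by simp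
    ultimately show ?thesis by simp
  qed
  have logN: "log 2 (real N) \<ge> 0" using N by simp
  have arg0: "2 / real N * (real L + log 2 (real N)) \<ge> 0" using logN by simp
  have te_eq: "te = ln A * sqrt (2 / real N * (real L + log 2 (real N)))"
    unfolding te_def A_def by (simp add: log_def)
  show "te \<ge> 0" unfolding te_eq using lnA ln2_ge_half arg0 by (intro mult_nonneg_nonneg) auto
  have "real N * te\<^sup>2 = 2 * (ln A)\<^sup>2 * (real L + log 2 (real N))"
    unfolding te_eq using N arg0 by (simp add: power_mult_distrib)
  also have "\<dots> \<ge> 2 * (2 * ln 2)\<^sup>2 * log 2 (real N)"
    using lnA ln2_ge_half logN by (intro mult_mono power_mono) auto
  finally have "real N * te\<^sup>2 \<ge> 8 * ln 2 * ln (real N)"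
    by (simp add: log_def power2_eq_square)
  moreover have "8 * ln 2 * ln (real N) \<ge> 26 / 10 * ln (real N)"
    using ln2_ge_half N by (intro mult_right_mono) auto
  ultimately show "ln (real N) \<le> real N * te\<^sup>2 / (26 / 10)" by simp
qed

lemma conc_final:
  fixes p :: "bool pmf" and R :: real and L N :: nat
  assumes N: "N > 0"
    and R: "R \<le> real N * (entropy2 p - log 2 (2 ^ L + 3) * sqrt (2 / real N * (real L + log 2 (real N))))"
  shows "(\<Sum>x\<in>{x. length x = N \<and> 2 powr (- R) < pmf (replicate_pmf N p) x}. pmf (replicate_pmf N p) x) \<le> 1 / real N"
proof -
  define ds where "ds = log 2 (2 ^ L + 3) * sqrt (2 / real N * (real L + log 2 (real N)))"
  define te where "te = ln 2 * ds"
  define lam where "lam = te / (13 / 10)"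
  define H where "H = entropy2 p"
  have te0: "te \<ge> 0" and keyN: "ln (real N) \<le> real N * te\<^sup>2 / (26 / 10)"
    using key_exponent[OF N, of L] unfolding te_def ds_def by auto
  have lam0: "lam \<ge> 0" using te0 by (simp add: lam_def)
  define E where "E = - lam * (ln 2 * H) + lam\<^sup>2 * (13 / 10) / 2"
  have "(\<Sum>x\<in>{x. length x = N \<and> 2 powr (- R) < pmf (replicate_pmf N p) x}. pmf (replicate_pmf N p) x)
      \<le> (2 powr (- R)) powr (- lam) * (\<Sum>b\<in>UNIV. pmf p b powr (1 + lam)) ^ N"
    by (rule conc_markov) (use lam0 in auto)
  also have "\<dots> \<le> exp (lam * R * ln 2) * exp E ^ N"
  proof (rule mult_mono)
    show "(2 powr (- R)) powr (- lam) \<le> exp (lam * R * ln 2)"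
      by (simp add: powr_powr powr_def mult_ac)
    show "(\<Sum>b\<in>UNIV. pmf p b powr (1 + lam)) ^ N \<le> exp E ^ N"
      using mgf_bound[OF lam0, of p] unfolding E_def H_def
      by (intro power_mono) (auto intro: sum_nonneg)
  qed (auto intro!: zero_le_power sum_nonneg)
  also have "\<dots> = exp (lam * R * ln 2 + real N * E)"
    by (simp add: exp_add exp_of_nat_mult)
  also have "\<dots> \<le> exp (- (real N * te\<^sup>2 / (26 / 10)))"
  proof -
    have "lam * R * ln 2 \<le> lam * (real N * (H - ds)) * ln 2"
      using R lam0 unfolding H_def ds_def by (intro mult_right_mono mult_left_mono) auto
    moreover have "lam * (real N * (H - ds)) * ln 2 + real N * E = - (real N * te\<^sup>2 / (26 / 10))"
      unfolding E_def lam_def te_def by (simp add: field_simps power2_eq_square)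
    ultimately show ?thesis by simp
  qed
  also have "\<dots> \<le> exp (- ln (real N))" using keyN by simp
  also have "\<dots> = 1 / real N" using N by (simp add: exp_minus inverse_eq_divide)
  finally show ?thesis .
qed


lemma finpmf_rep: "finpmf (replicate_pmf N (p :: bool pmf))"
  unfolding finpmf_def by (rule finite_subset[OF _ finite_bits[of N]]) (auto simp: set_replicate_pmf)

theorem lemma10:
  fixes L N k i :: nat
    and \<xi> \<delta> :: real
    and qX :: "nat \<Rightarrow> bool pmf"
    and W :: "bool list \<Rightarrow> 'z::finite pmf"
    and F :: "nat \<Rightarrow> (bool list \<Rightarrow> bool list) set"
    and enc :: "nat \<Rightarrow> bool list \<Rightarrow> bool list"
    and r m s :: "nat \<Rightarrow> nat"
  assumes L2: "L \<ge> 2"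
    and N_pos: "N > 0"
    and xi_pos: "\<xi> > 0"
    and i_range: "i \<in> {1..k}"
    and r_def: "\<And>l. l \<in> {1..L} \<Longrightarrow> real (r l) = real N *
       (cond_entropy2 (q_Xl_ZXprev L qX W l)
        - (2 * (log 2 (2 ^ L + 3) * sqrt (2 / real N * (real L + log 2 (real N))) + \<xi>)) / 2)"
    and m_def: "\<And>l. l \<in> {1..L} \<Longrightarrow> real (m l) = real N *
       (entropy2 (qX l)
        + (2 * (log 2 (2 ^ L + 3) * sqrt (2 / real N * (real L + log 2 (real N))) + \<xi>)) / 2)"
    and s_def: "\<And>l. l \<in> {1..L} \<Longrightarrow> real (s l) = real N *
       (mutual_info2 (q_Xl_ZXprev L qX W l)
        + 2 * (log 2 (2 ^ L + 3) * sqrt (2 / real N * (real L + log 2 (real N))) + \<xi>))"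
    and hash: "\<And>l. l \<in> {1..L} \<Longrightarrow> two_universal N (r l) (F l)"
    and enc_len: "\<And>l E. l \<in> {1..L} \<Longrightarrow> length E = m l \<Longrightarrow> length (enc l E) = N"
    and enc_approx: "\<And>l. l \<in> {1..L} \<Longrightarrow>
       var_dist (map_pmf (enc l) (unif_bits (m l))) (replicate_pmf N (qX l)) \<le> \<delta>"
  shows "var_dist (scheme_block L N W F enc m s k i) (q_block L N qX W)
     \<le> real L * (\<delta> + (2 / real N + 2 powr (real L / 2) * 2 powr (- real N * \<xi> / 2)))
         * ((real L ^ i - 1) / (real L - 1))
       + real L ^ (i + 1) * \<delta>"
proof -
  define ds where "ds = log 2 (2 ^ L + 3) * sqrt (2 / real N * (real L + log 2 (real N)))"
  define \<eta> where "\<eta> = 2 powr (- real N * \<xi> / 2) + 2 / real N"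
  define d0 where "d0 = 2 / real N + 2 powr (real L / 2) * 2 powr (- real N * \<xi> / 2)"
  have i1: "1 \<le> i" "i \<le> k" using i_range by auto
  have L1: "1 \<in> {1..L}" using L2 by auto
  have delta0: "\<delta> \<ge> 0"
    using enc_approx[OF L1] var_dist_nonneg[OF finpmf_map[OF finpmf_unif] finpmf_rep, of "enc 1" "m 1" N "qX 1"]
    by linarith
  have coord: "var_dist (bind_pmf (pmf_of_set (F l)) (\<lambda>G. chain enc m s l G (i - 1))) (replicate_pmf N (qX l))
      \<le> \<delta> + real (i - 1) * (\<eta> + \<delta>)" if l: "l \<in> {1..L}" for l
  proof -
    have fF: "finite (F l)" and neF: "F l \<noteq> {}"
      and glen: "\<And>g x. g \<in> F l \<Longrightarrow> length x = N \<Longrightarrow> length (g x) = r l"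
      using hash[OF l] unfolding two_universal_def by auto
    define Hc where "Hc = cond_entropy2 (q_Xl_ZXprev L qX W l)"
    define H where "H = entropy2 (qX l)"
    have HcH: "Hc \<le> H" "Hc + mutual_info2 (q_Xl_ZXprev L qX W l) = H"
      using cond_le_entropy[OF l, of qX W] unfolding Hc_def H_def by auto
    have rR0: "real (r l) = real N * (Hc - (2 * (ds + \<xi>)) / 2)"
      using r_def[OF l] unfolding Hc_def ds_def .
    have rR: "real (r l) = real N * (Hc - ds - \<xi>)"
      using rR0 by (simp add: field_simps)
    define I where "I = mutual_info2 (q_Xl_ZXprev L qX W l)"
    have sS: "real (s l) = real N * (I + 2 * (ds + \<xi>))"
      using s_def[OF l] unfolding I_def ds_def .
    have mM: "real (m l) = real N * (H + 2 * (ds + \<xi>) / 2)"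
      using m_def[OF l] unfolding H_def ds_def .
    have HI: "H = Hc + I" using HcH(2) unfolding I_def by simp
    have "real (r l) + real (s l) = real (m l)"
      unfolding rR sS mM HI by (simp add: algebra_simps)
    then have rs: "r l + s l = m l" by linarith
    define D where "D = pmf_of_set (F l)"
    define Q where "Q = replicate_pmf N (qX l)"
    have fD: "finpmf D" unfolding D_def using fF neF by (rule finpmf_of_set)
    have fQ: "finpmf Q" unfolding Q_def finpmf_def
      by (rule finite_subset[OF _ finite_bits[of N]]) (auto simp: set_replicate_pmf)
    define R where "R = real (r l) + real N * \<xi>"
    have lhl1: "var_dist (bind_pmf D (\<lambda>G. map_pmf (\<lambda>x. (G, G x)) Q)) (bind_pmf D (\<lambda>G. map_pmf (Pair G) (unif_bits (r l))))
        \<le> sqrt (2 powr (- real N * \<xi>)) + 2 * (\<Sum>x\<in>{x. length x = N \<and> 2 powr (- R) < pmf Q x}. pmf Q x)"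
      unfolding D_def
    proof (rule lhl[OF hash[OF l]])
      show "set_pmf Q \<subseteq> {xs. length xs = N}" unfolding Q_def by (auto simp: set_replicate_pmf)
      show "real (2 ^ r l) * 2 powr - R \<le> 2 powr (- real N * \<xi>)"
        unfolding R_def by (simp add: powr_realpow[symmetric] powr_add[symmetric])
    qed simp
    have conc: "(\<Sum>x\<in>{x. length x = N \<and> 2 powr (- R) < pmf Q x}. pmf Q x) \<le> 1 / real N"
      unfolding Q_def
    proof (rule conc_final[OF N_pos])
      have "R = real N * (Hc - ds)" unfolding R_def rR by (simp add: algebra_simps)
      also have "\<dots> \<le> real N * (H - ds)" using HcH(1) by (intro mult_left_mono) auto
      finally show "R \<le> real N * (entropy2 (qX l) - log 2 (2 ^ L + 3) * sqrt (2 / real N * (real L + log 2 (real N))))"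
        unfolding H_def ds_def .
    qed
    have sq: "sqrt (2 powr (- real N * \<xi>)) = 2 powr (- real N * \<xi> / 2)"
      by (simp add: powr_half_sqrt[symmetric] powr_powr)
    have lhl2: "var_dist (bind_pmf D (\<lambda>G. map_pmf (\<lambda>x. (G, G x)) Q)) (bind_pmf D (\<lambda>G. map_pmf (Pair G) (unif_bits (r l)))) \<le> \<eta>"
      using lhl1 conc unfolding sq \<eta>_def by linarith
    have cb: "var_dist (bind_pmf D (\<lambda>G. map_pmf (Pair G) (chain enc m s l G (i - 1)))) (bind_pmf D (\<lambda>G. map_pmf (Pair G) Q))
        \<le> \<delta> + real (i - 1) * (\<eta> + \<delta>)"
    proof (rule chain_bound[where s=s and m=m and l=l and r="r l" and enc=enc and N=N, OF fD fQ rs _ _ _ lhl2])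
      show "\<And>G x. G \<in> set_pmf D \<Longrightarrow> length x = N \<Longrightarrow> length (G x) = r l"
        unfolding D_def using fF neF glen by auto
      show "\<And>E. length E = m l \<Longrightarrow> length (enc l E) = N" by (rule enc_len[OF l])
      show "var_dist (map_pmf (enc l) (unif_bits (m l))) Q \<le> \<delta>" unfolding Q_def by (rule enc_approx[OF l])
    qed
    have fch: "finpmf (chain enc m s l G n)" for G n
      by (induction n) (auto intro!: finpmf_map finpmf_bind finpmf_unif)
    have "var_dist (map_pmf snd (bind_pmf D (\<lambda>G. map_pmf (Pair G) (chain enc m s l G (i - 1)))))
                   (map_pmf snd (bind_pmf D (\<lambda>G. map_pmf (Pair G) Q)))
        \<le> var_dist (bind_pmf D (\<lambda>G. map_pmf (Pair G) (chain enc m s l G (i - 1)))) (bind_pmf D (\<lambda>G. map_pmf (Pair G) Q))"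
      by (rule var_dist_map_le) (use fD fQ fch in \<open>auto intro!: finpmf_bind finpmf_map\<close>)
    moreover have "map_pmf snd (bind_pmf D (\<lambda>G. map_pmf (Pair G) (chain enc m s l G (i - 1)))) = bind_pmf D (\<lambda>G. chain enc m s l G (i - 1))"
      by (simp add: map_bind_pmf map_pmf_comp)
    moreover have "map_pmf snd (bind_pmf D (\<lambda>G. map_pmf (Pair G) Q)) = Q"
      by (simp add: map_bind_pmf map_pmf_comp bind_pmf_const)
    ultimately show ?thesis using cb unfolding D_def Q_def by simp
  qed
  define Ms where "Ms = map (\<lambda>l. bind_pmf (pmf_of_set (F l)) (\<lambda>G. chain enc m s l G (i - 1))) [1..<L+1]"
  define Qs where "Qs = map (\<lambda>l. replicate_pmf N (qX l)) [1..<L+1]"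
  have fch: "finpmf (chain enc m s l G n)" for l G n
    by (induction n) (auto intro!: finpmf_map finpmf_bind finpmf_unif)
  have fMs: "finpmf p" if "p \<in> set Ms" for p
  proof -
    from that obtain l where l0: "l \<in> set [1..<L+1]" and p: "p = bind_pmf (pmf_of_set (F l)) (\<lambda>G. chain enc m s l G (i - 1))"
      unfolding Ms_def set_map by blast
    from l0 have l: "l \<in> {1..L}" by (simp only: set_upt) auto
    have "finite (F l)" "F l \<noteq> {}" using hash[OF l] unfolding two_universal_def by auto
    then show ?thesis unfolding p by (intro finpmf_bind finpmf_of_set fch)
  qed
  have fQs: "finpmf p" if "p \<in> set Qs" for p using that unfolding Qs_def by (auto intro: finpmf_rep)
  have fCB: "finpmf (channel_block N W Xb)" for Xb
    unfolding channel_block_def Let_def by (intro finpmf_map finpmf_list_pmf finpmf_finite_type)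
  have "var_dist (scheme_block L N W F enc m s k i) (q_block L N qX W)
      = var_dist (bind_pmf (list_pmf Ms) (channel_block N W)) (bind_pmf (list_pmf Qs) (channel_block N W))"
    unfolding scheme_block_eq[OF i1] q_block_eq Ms_def Qs_def ..
  also have "\<dots> \<le> var_dist (list_pmf Ms) (list_pmf Qs)"
    by (rule var_dist_bind_le) (use fMs fQs fCB in \<open>auto intro!: finpmf_list_pmf\<close>)
  also have "\<dots> \<le> (\<Sum>j<length Ms. var_dist (Ms ! j) (Qs ! j))"
    by (rule var_dist_list_pmf) (use fMs fQs in \<open>auto simp: Ms_def Qs_def\<close>)
  also have "\<dots> \<le> real (card {..<length Ms}) * (\<delta> + real (i - 1) * (\<eta> + \<delta>))"
  proof (rule sum_bounded_above)
    fix j assume "j \<in> {..<length Ms}"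
    then have j: "j < L" by (simp add: Ms_def del: upt_Suc)
    then have "Ms ! j = bind_pmf (pmf_of_set (F (Suc j))) (\<lambda>G. chain enc m s (Suc j) G (i - 1))"
      "Qs ! j = replicate_pmf N (qX (Suc j))" by (simp_all add: Ms_def Qs_def nth_map nth_upt del: upt_Suc)
    moreover have "Suc j \<in> {1..L}" using j by auto
    ultimately show "var_dist (Ms ! j) (Qs ! j) \<le> \<delta> + real (i - 1) * (\<eta> + \<delta>)"
      using coord by simp
  qed
  also have "\<dots> = real L * (\<delta> + real (i - 1) * (\<eta> + \<delta>))" by (simp add: Ms_def del: upt_Suc)
  also have "\<dots> \<le> real L * (\<delta> + d0) * ((real L ^ i - 1) / (real L - 1)) + real L ^ (i + 1) * \<delta>"
  proof -
    have Lr: "real L \<ge> 2" using L2 by simp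
    have pw: "2 powr (real L / 2) \<ge> 1" by (rule ge_one_powr_ge_zero) auto
    have eta_d0: "\<eta> \<le> d0" unfolding \<eta>_def d0_def
      using mult_right_mono[OF pw, of "2 powr (- real N * \<xi> / 2)"] by simp
    have d00: "d0 \<ge> 0" unfolding d0_def by simp
    have bern: "1 + real i * (real L - 1) \<le> real L ^ i"
      using Bernoulli_inequality[of "real L - 1" i] Lr by simp
    have Si: "real i \<le> (real L ^ i - 1) / (real L - 1)"
      using bern Lr by (simp add: field_simps)
    have "\<delta> + real (i - 1) * (\<eta> + \<delta>) \<le> real i * (\<delta> + d0)"
    proof -
      have "real (i - 1) * (\<eta> + \<delta>) \<le> real (i - 1) * (d0 + \<delta>)"
        using eta_d0 by (intro mult_left_mono) auto
      moreover have "real (i - 1) = real i - 1" using i1 by simp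
      ultimately show ?thesis using d00 delta0 by (simp add: algebra_simps)
    qed
    also have "\<dots> \<le> (real L ^ i - 1) / (real L - 1) * (\<delta> + d0)"
      using Si d00 delta0 by (intro mult_right_mono) auto
    finally have A: "\<delta> + real (i - 1) * (\<eta> + \<delta>) \<le> (real L ^ i - 1) / (real L - 1) * (\<delta> + d0)" .
    have "real L * (\<delta> + real (i - 1) * (\<eta> + \<delta>)) \<le> real L * ((real L ^ i - 1) / (real L - 1) * (\<delta> + d0))"
      using A by (intro mult_left_mono) auto
    moreover have "real L ^ (i + 1) * \<delta> \<ge> 0" using delta0 by simp
    ultimately show ?thesis by (simp add: mult_ac)
  qed
  finally show ?thesis unfolding d0_def .
qed

end
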